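(* If $(G_2;\mathcal{B},\mathcal{S})$ is a benign planar tumor graph on $n$ vertices, then there exists an edge probability measure $\mu$ on the complete graph with vertex set $\mathcal{B}$ such that \begin{align*} \mathrm{cyc}_5(G_2;\mathcal{B},\mathcal{S}) &\le\Bigl(2\sum_{e\in\operatorname{supp}\mu}\mu(e)^2+\beta(\mu;P_3)\Bigr)n^2,\quad\text{and}\\ \mathrm{cyc}_{2m+1}(G_2;\mathcal{B},\mathcal{S}) &\le\bigl(2m\cdot\beta(\mu;C_m)+\beta(\mu;P_{m+1})\bigr)n^m\quad\text{for } m\ge 3. \end{align*}
   Context: A tumor graph is a triple $(G;\mathcal{B},\mathcal{S})$ where $G$ is a graph, $V(G)=\mathcal{B}\sqcup\mathcal{S}$, and every vertex in $\mathcal{S}$ has at most two neighbors in $\mathcal{B}$; it is planar if $G$ is planar. For distinct $x,y\in\mathcal{B}$, the tumor $\mathcal{S}_{xy}=\{s\in\mathcal{S}:N(s)\cap\mathcal{B}=\{x,y\}\}$; the tumor graph is benign if every edge $uv$ with $u,v\in\mathcal{S}$ has $u,v\in\mathcal{S}_{xy}$ for some distinct $x,y\in\mathcal{B}$. A copy of the cycle $C_{2m+1}$ is good if its vertices can be cyclically labeled $v_1,\dots,v_{2m+1}$ with $v_1,v_3,\dots,v_{2m-1}\in\mathcal{B}$ and $v_2,\dots,v_{2m}\in\mathcal{S}$ (and $v_{2m+1}$ arbitrary); $\mathrm{cyc}_{2m+1}(G;\mathcal{B},\mathcal{S})$ is their number. $P_k$ is the path on $k$ vertices. An edge probability measure on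 a complete graph $K$ is a probability measure $\mu$ on $E(K)$; $\operatorname{supp}\mu$ is the set of edges of positive mass; $\mu(H')=\prod_{e\in E(H')}\mu(e)$ for $H'\subseteq K$; and $\beta(\mu;H)=\sum_{H'}\mu(H')$ over all subgraphs $H'$ of $K$ isomorphic to $H$. *)

theory Defs
  imports "HOL-Analysis.Analysis" "HOL-Probability.Probability_Mass_Function"
begin

definition simple_graph :: "'a set \<Rightarrow> 'a set set \<Rightarrow> bool" where
  "simple_graph V E \<longleftrightarrow> finite V \<and> (\<forall>e\<in>E. e \<subseteq> V \<and> card e = 2)"

definition nbrs :: "'a set set \<Rightarrow> 'a \<Rightarrow> 'a set" where
  "nbrs E v = {u. {u, v} \<in> E}"

definition planar_graph :: "'a set \<Rightarrow> 'a set set \<Rightarrow> bool" where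
  "planar_graph V E \<longleftrightarrow>
     (\<exists>(p :: 'a \<Rightarrow> complex) (\<gamma> :: 'a set \<Rightarrow> real \<Rightarrow> complex).
        inj_on p V \<and>
        (\<forall>e\<in>E. arc (\<gamma> e) \<and> {pathstart (\<gamma> e), pathfinish (\<gamma> e)} = p ` e
                \<and> path_image (\<gamma> e) \<inter> p ` V = p ` e) \<and>
        (\<forall>e\<in>E. \<forall>e'\<in>E. e \<noteq> e' \<longrightarrow> path_image (\<gamma> e) \<inter> path_image (\<gamma> e') \<subseteq> p ` (e \<inter> e')))"

definition tumor_graph :: "'a set \<Rightarrow> 'a set set \<Rightarrow> 'a set \<Rightarrow> 'a set \<Rightarrow> bool" where
  "tumor_graph V E B S \<longleftrightarrow> simple_graph V E \<and> B \<union> S = V \<and> B \<inter> S = {}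
     \<and> (\<forall>s\<in>S. card (nbrs E s \<inter> B) \<le> 2)"

definition tumor :: "'a set set \<Rightarrow> 'a set \<Rightarrow> 'a set \<Rightarrow> 'a \<Rightarrow> 'a \<Rightarrow> 'a set" where
  "tumor E B S x y = {s\<in>S. nbrs E s \<inter> B = {x, y}}"

definition benign :: "'a set \<Rightarrow> 'a set set \<Rightarrow> 'a set \<Rightarrow> 'a set \<Rightarrow> bool" where
  "benign V E B S \<longleftrightarrow> (\<forall>u v. {u, v} \<in> E \<and> u \<in> S \<and> v \<in> S \<longrightarrow>
     (\<exists>x\<in>B. \<exists>y\<in>B. x \<noteq> y \<and> u \<in> tumor E B S x y \<and> v \<in> tumor E B S x y))"

definition cycle_edges :: "nat \<Rightarrow> (nat \<Rightarrow> 'a) \<Rightarrow> 'a set set" where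
  "cycle_edges k v = {{v i, v ((i + 1) mod k)} | i. i < k}"

definition path_edges :: "nat \<Rightarrow> (nat \<Rightarrow> 'a) \<Rightarrow> 'a set set" where
  "path_edges k v = {{v i, v (i + 1)} | i. i + 1 < k}"

text \<open>Good copies of C_(2m+1) (as subgraphs, determined by their edge sets); labels
  0-indexed: v 0, v 2, ..., v (2m-2) in B; v 1, v 3, ..., v (2m-1) in S; v (2m) arbitrary.\<close>
definition good_cycles :: "'a set \<Rightarrow> 'a set set \<Rightarrow> 'a set \<Rightarrow> 'a set \<Rightarrow> nat \<Rightarrow> 'a set set set" where
  "good_cycles V E B S m = {C. C \<subseteq> E \<and> (\<exists>v. inj_on v {0..<2*m+1} \<and> v ` {0..<2*m+1} \<subseteq> V
      \<and> C = cycle_edges (2*m+1) v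
      \<and> (\<forall>i<2*m. even i \<longrightarrow> v i \<in> B) \<and> (\<forall>i<2*m. odd i \<longrightarrow> v i \<in> S))}"

definition cyc :: "'a set \<Rightarrow> 'a set set \<Rightarrow> 'a set \<Rightarrow> 'a set \<Rightarrow> nat \<Rightarrow> nat" where
  "cyc V E B S m = card (good_cycles V E B S m)"

definition complete_edges :: "'a set \<Rightarrow> 'a set set" where
  "complete_edges B = {e. e \<subseteq> B \<and> card e = 2}"

definition path_copies :: "'a set \<Rightarrow> nat \<Rightarrow> 'a set set set" where
  "path_copies B k = {path_edges k v | v. inj_on v {0..<k} \<and> v ` {0..<k} \<subseteq> B}"

definition cycle_copies :: "'a set \<Rightarrow> nat \<Rightarrow> 'a set set set" where
  "cycle_copies B k = {cycle_edges k v | v. inj_on v {0..<k} \<and> v ` {0..<k} \<subseteq> B}"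

definition beta :: "'a set pmf \<Rightarrow> 'a set set set \<Rightarrow> real" where
  "beta \<mu> Hs = (\<Sum>H'\<in>Hs. \<Prod>e\<in>H'. pmf \<mu> e)"

end

theory Submission
  imports Defs "HOL-Analysis.Analysis"
begin


lemma conn_in_inside:
  assumes "connected T" "T \<inter> K = {}" "p \<in> T" "p \<in> inside K"
  shows "T \<subseteq> inside K"
proof
  fix q assume q: "q \<in> T"
  have "outside K \<inter> T = {}"
    using inside_outside_intersect_connected[of T K] assms by blast
  moreover have "q \<in> inside K \<union> outside K" using q assms(2) by auto
  ultimately show "q \<in> inside K" using q by blast
qed

lemma conn_in_outside:
  assumes "connected T" "T \<inter> K = {}" "p \<in> T" "p \<in> outside K"
  shows "T \<subseteq> outside K"
proof
  fix q assume q: "q \<in> T"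
  have "inside K \<inter> T = {}"
    using inside_outside_intersect_connected[of T K] assms by blast
  moreover have "q \<in> inside K \<union> outside K" using q assms(2) by auto
  ultimately show "q \<in> outside K" using q by blast
qed

lemma arc_side:
  fixes h :: "real \<Rightarrow> 'a::real_normed_vector"
  assumes "arc h" "path_image h \<inter> K \<subseteq> {pathstart h}" "pathfinish h \<in> outside K"
  shows "path_image h \<inter> inside K = {}"
proof (rule ccontr)
  assume "path_image h \<inter> inside K \<noteq> {}"
  then obtain t where t: "t \<in> {0..1}" "h t \<in> inside K"
    unfolding path_image_def by blast
  have inj: "inj_on h {0..1}" using assms(1) arc_imp_inj_on by blast
  have sub: "path_image (subpath t 1 h) \<inter> K = {}"
  proof (rule ccontr)
    assume "path_image (subpath t 1 h) \<inter> K \<noteq> {}"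
    moreover have "path_image (subpath t 1 h) = h ` {t..1}" using t by (simp add: path_image_subpath)
    ultimately have "h ` {t..1} \<inter> K \<noteq> {}" by simp
    then obtain w where "w \<in> h ` {t..1}" "w \<in> K" by blast
    then obtain u where u: "u \<in> {t..1}" "h u \<in> K" by blast
    have u01: "u \<in> {0..1}" using u t by simp
    have "h u \<in> path_image h" using u01 unfolding path_image_def by blast
    then have "h u \<in> {pathstart h}" using u(2) assms(2) by blast
    then have "h u = h 0" by (simp add: pathstart_def)
    then have "u = 0" using u01 by (intro inj_onD[OF inj]) auto
    then have "t = 0" using u t by simp
    then have "h t \<in> K" using u \<open>u = 0\<close> by simp
    then show False using t(2) inside_no_overlap by (metis disjoint_iff)
  qed
  have "path (subpath t 1 h)" using assms(1) t by (simp add: arc_imp_path path_subpath)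
  then have c: "connected (path_image (subpath t 1 h))" by (simp add: connected_path_image)
  have "h t \<in> path_image (subpath t 1 h)" using t unfolding path_image_subpath by simp
  from conn_in_inside[OF c sub this t(2)]
  have "pathfinish (subpath t 1 h) \<in> inside K" by (meson pathfinish_in_path_image subsetD)
  then have "pathfinish h \<in> inside K" by (simp add: pathfinish_def subpath_def)
  then show False using assms(3) by (simp add: inside_outside)
qed

definition k33 :: "(nat \<Rightarrow> complex) \<Rightarrow> (nat \<Rightarrow> complex) \<Rightarrow> (nat \<Rightarrow> nat \<Rightarrow> real \<Rightarrow> complex) \<Rightarrow> bool" where
 "k33 L R g \<longleftrightarrow>
  (\<forall>i<3. \<forall>j<3. arc (g i j) \<and> pathstart (g i j) = L i \<and> pathfinish (g i j) = R j) \<and>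
  (\<forall>i<3. \<forall>j<3. \<forall>k<3. L k \<in> path_image (g i j) \<longrightarrow> k = i) \<and>
  (\<forall>i<3. \<forall>j<3. \<forall>k<3. R k \<in> path_image (g i j) \<longrightarrow> k = j) \<and>
  (\<forall>i<3. \<forall>j<3. \<forall>i'<3. \<forall>j'<3. (i \<noteq> i' \<or> j \<noteq> j') \<longrightarrow>
     path_image (g i j) \<inter> path_image (g i' j') \<subseteq> (if i = i' then {L i} else {}) \<union> (if j = j' then {R j} else {}))"

lemma k33D:
  assumes "k33 L R g"
  shows k33_arc: "\<And>i j. i < 3 \<Longrightarrow> j < 3 \<Longrightarrow> arc (g i j)"
    and k33_start: "\<And>i j. i < 3 \<Longrightarrow> j < 3 \<Longrightarrow> pathstart (g i j) = L i"
    and k33_finish: "\<And>i j. i < 3 \<Longrightarrow> j < 3 \<Longrightarrow> pathfinish (g i j) = R j"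
    and k33_L: "\<And>i j k. i < 3 \<Longrightarrow> j < 3 \<Longrightarrow> k < 3 \<Longrightarrow> L k \<in> path_image (g i j) \<Longrightarrow> k = i"
    and k33_R: "\<And>i j k. i < 3 \<Longrightarrow> j < 3 \<Longrightarrow> k < 3 \<Longrightarrow> R k \<in> path_image (g i j) \<Longrightarrow> k = j"
    and k33_int: "\<And>i j i' j'. i < 3 \<Longrightarrow> j < 3 \<Longrightarrow> i' < 3 \<Longrightarrow> j' < 3 \<Longrightarrow> i \<noteq> i' \<or> j \<noteq> j' \<Longrightarrow>
       path_image (g i j) \<inter> path_image (g i' j') \<subseteq> (if i = i' then {L i} else {}) \<union> (if j = j' then {R j} else {})"
  using assms unfolding k33_def by simp_all

lemma k33_Lin: "k33 L R g \<Longrightarrow> i < 3 \<Longrightarrow> j < 3 \<Longrightarrow> L i \<in> path_image (g i j)"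
  by (metis k33_start pathstart_in_path_image)

lemma k33_Rin: "k33 L R g \<Longrightarrow> i < 3 \<Longrightarrow> j < 3 \<Longrightarrow> R j \<in> path_image (g i j)"
  by (metis k33_finish pathfinish_in_path_image)

lemma k33_disj:
  assumes "k33 L R g" "i < 3" "j < 3" "i' < 3" "j' < 3" "i \<noteq> i'" "j \<noteq> j'"
  shows "path_image (g i j) \<inter> path_image (g i' j') = {}"
  using k33_int[OF assms(1-5)] assms(6,7) by auto

lemma k33_P:
  assumes k: "k33 L R g" and j: "j < 3"
  defines "P \<equiv> g 0 j +++ reversepath (g 1 j)"
  shows "arc P" "pathstart P = L 0" "pathfinish P = L 1"
    "path_image P = path_image (g 0 j) \<union> path_image (g 1 j)"
proof -
  have i: "path_image (g 0 j) \<inter> path_image (reversepath (g 1 j)) \<subseteq> {pathstart (reversepath (g 1 j))}"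
    using k33_int[OF k, of 0 j 1 j] j k33_finish[OF k, of 1 j] by simp
  show "arc P" unfolding P_def
    by (rule arc_join) (use k j i k33_arc k33_finish k33_start in \<open>auto simp: arc_reversepath\<close>)
  show "pathstart P = L 0" "pathfinish P = L 1" unfolding P_def using k j
    by (auto simp: k33_start)
  show "path_image P = path_image (g 0 j) \<union> path_image (g 1 j)" unfolding P_def
    using k j by (subst path_image_join) (auto simp: k33_start k33_finish)
qed

lemma k33_PP:
  assumes k: "k33 L R g" and j: "j < 3" and j': "j' < 3" "j \<noteq> j'"
  shows "(path_image (g 0 j) \<union> path_image (g 1 j)) \<inter> (path_image (g 0 j') \<union> path_image (g 1 j')) = {L 0, L 1}"
proof
  have "path_image (g 0 j) \<inter> path_image (g 0 j') \<subseteq> {L 0}"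
    using k33_int[OF k, of 0 j 0 j'] j j' by simp
  moreover have "path_image (g 1 j) \<inter> path_image (g 1 j') \<subseteq> {L 1}"
    using k33_int[OF k, of 1 j 1 j'] j j' by simp
  moreover have "path_image (g 0 j) \<inter> path_image (g 1 j') = {}"
    using k33_disj[OF k, of 0 j 1 j'] j j' by simp
  moreover have "path_image (g 1 j) \<inter> path_image (g 0 j') = {}"
    using k33_disj[OF k, of 1 j 0 j'] j j' by simp
  ultimately show "(path_image (g 0 j) \<union> path_image (g 1 j)) \<inter> (path_image (g 0 j') \<union> path_image (g 1 j')) \<subseteq> {L 0, L 1}"
    by blast
  show "{L 0, L 1} \<subseteq> (path_image (g 0 j) \<union> path_image (g 1 j)) \<inter> (path_image (g 0 j') \<union> path_image (g 1 j'))"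
    using k33_Lin[OF k, of 0 j] k33_Lin[OF k, of 1 j] k33_Lin[OF k, of 0 j'] k33_Lin[OF k, of 1 j'] j j' by auto
qed

lemma k33_inside:
  assumes k: "k33 L R g"
    and c: "R 2 \<in> inside ((path_image (g 0 0) \<union> path_image (g 1 0)) \<union> (path_image (g 0 1) \<union> path_image (g 1 1)))"
  shows False
proof -
  define P where "P j = g 0 j +++ reversepath (g 1 j)" for j
  define J where "J j = path_image (g 0 j) \<union> path_image (g 1 j)" for j
  have Pa: "arc (P j)" "pathstart (P j) = L 0" "pathfinish (P j) = L 1" "path_image (P j) = J j"
    if "j < 3" for j using k33_P[OF k that] unfolding P_def J_def by auto
  have PP: "J j \<inter> J j' = {L 0, L 1}" if "j < 3" "j' < 3" "j \<noteq> j'" for j j'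
    using k33_PP[OF k that] unfolding J_def by auto
  have L01: "L 0 \<noteq> L 1"
    using k33_L[OF k, of 0 0 1] k33_Lin[OF k, of 0 0] by auto
  have c': "R 2 \<in> inside (J 0 \<union> J 1)" using c unfolding J_def .
  have ne: "path_image (P 2) \<inter> inside (path_image (P 0) \<union> path_image (P 1)) \<noteq> {}"
    using c' Pa[of 2] Pa[of 0] Pa[of 1] k33_Rin[OF k, of 0 2] unfolding J_def by auto
  obtain "inside (path_image (P 0) \<union> path_image (P 2)) \<union> inside (path_image (P 1) \<union> path_image (P 2)) \<union>
           (path_image (P 2) - {L 0, L 1}) = inside (path_image (P 0) \<union> path_image (P 1))"
    by (rule split_inside_simple_closed_curve[of "P 0" "L 0" "L 1" "P 1" "P 2"])
       (use Pa PP L01 ne in \<open>simp_all add: arc_imp_simple_path\<close>)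
  then have split: "inside (J 0 \<union> J 2) \<union> inside (J 1 \<union> J 2) \<union> (J 2 - {L 0, L 1}) = inside (J 0 \<union> J 1)"
    using Pa by simp
  have d22: "path_image (g 2 2) \<inter> (J 0 \<union> J 1) = {}"
    using k33_disj[OF k, of 2 2 0 0] k33_disj[OF k, of 2 2 1 0] k33_disj[OF k, of 2 2 0 1]
      k33_disj[OF k, of 2 2 1 1] unfolding J_def by auto
  have "path_image (g 2 2) \<subseteq> inside (J 0 \<union> J 1)"
    by (rule conn_in_inside[OF connected_arc_image[OF k33_arc[OF k]] d22 k33_Rin[OF k] c']) auto
  then have s_in: "L 2 \<in> inside (J 0 \<union> J 1)" using k33_Lin[OF k, of 2 2] by auto
  have "L 2 \<notin> J 2" using k33_L[OF k, of 0 2 2] k33_L[OF k, of 1 2 2] unfolding J_def by auto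
  then have "L 2 \<in> inside (J 0 \<union> J 2) \<or> L 2 \<in> inside (J 1 \<union> J 2)"
    using s_in split by blast
  then show False
  proof
    assume s1: "L 2 \<in> inside (J 0 \<union> J 2)"
    have d: "path_image (g 2 1) \<inter> (J 0 \<union> J 2) = {}"
      using k33_disj[OF k, of 2 1 0 0] k33_disj[OF k, of 2 1 1 0] k33_disj[OF k, of 2 1 0 2]
        k33_disj[OF k, of 2 1 1 2] unfolding J_def by auto
    have "path_image (g 2 1) \<subseteq> inside (J 0 \<union> J 2)"
      by (rule conn_in_inside[OF connected_arc_image[OF k33_arc[OF k]] d k33_Lin[OF k] s1]) auto
    then have "R 1 \<in> inside (J 0 \<union> J 1)" using k33_Rin[OF k, of 2 1] split by auto
    moreover have "R 1 \<in> J 0 \<union> J 1" using k33_Rin[OF k, of 0 1] unfolding J_def by auto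
    ultimately show False using inside_no_overlap by blast
  next
    assume s1: "L 2 \<in> inside (J 1 \<union> J 2)"
    have d: "path_image (g 2 0) \<inter> (J 1 \<union> J 2) = {}"
      using k33_disj[OF k, of 2 0 0 1] k33_disj[OF k, of 2 0 1 1] k33_disj[OF k, of 2 0 0 2]
        k33_disj[OF k, of 2 0 1 2] unfolding J_def by auto
    have "path_image (g 2 0) \<subseteq> inside (J 1 \<union> J 2)"
      by (rule conn_in_inside[OF connected_arc_image[OF k33_arc[OF k]] d k33_Lin[OF k] s1]) auto
    then have "R 0 \<in> inside (J 0 \<union> J 1)" using k33_Rin[OF k, of 2 0] split by auto
    moreover have "R 0 \<in> J 0 \<union> J 1" using k33_Rin[OF k, of 0 0] unfolding J_def by auto
    ultimately show False using inside_no_overlap by blast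
  qed
qed

lemma inv_inj: "inj (\<lambda>z::complex. 1 / (z - z0))"
proof (rule injI)
  fix a b :: complex assume "1 / (a - z0) = 1 / (b - z0)"
  then have "a - z0 = b - z0" by (metis divide_divide_eq_right div_by_1 mult_1)
  then show "a = b" by simp
qed

lemma inv_cont: "S \<subseteq> - {z0} \<Longrightarrow> continuous_on S (\<lambda>z::complex. 1 / (z - z0))"
  by (intro continuous_intros) auto

lemma inversion_inside:
  fixes c :: "real \<Rightarrow> complex"
  assumes sp: "simple_path c" and lp: "pathfinish c = pathstart c"
    and z0: "z0 \<in> inside (path_image c)" and q: "q \<in> outside (path_image c)"
  defines "f \<equiv> \<lambda>z. 1 / (z - z0)"
  shows "f q \<in> inside (f ` path_image c)"
proof -
  define K where "K = path_image c"
  define K' where "K' = f ` K"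
  have injf: "inj f" unfolding f_def by (rule inv_inj)
  have JK: "inside K \<noteq> {} \<and> open (inside K) \<and> connected (inside K) \<and> outside K \<noteq> {} \<and>
      open (outside K) \<and> connected (outside K) \<and> bounded (inside K) \<and> \<not> bounded (outside K) \<and>
      inside K \<inter> outside K = {} \<and> inside K \<union> outside K = - K"
    using Jordan_inside_outside[OF sp lp] unfolding K_def by blast
  have z0K: "z0 \<notin> K" using z0 unfolding K_def using inside_no_overlap by blast
  have z0O: "z0 \<notin> outside K" using z0 JK unfolding K_def by blast
  have contK: "continuous_on K f" unfolding f_def by (rule inv_cont) (use z0K in auto)
  have sp': "simple_path (f \<circ> c)"
    unfolding simple_path_def
  proof
    show "path (f \<circ> c)" using sp contK unfolding K_def
      by (simp add: path_continuous_image simple_path_imp_path)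
    show "loop_free (f \<circ> c)" using sp injf unfolding simple_path_def loop_free_def
      by (auto dest: injD)
  qed
  have lp': "pathfinish (f \<circ> c) = pathstart (f \<circ> c)" using lp by (simp add: pathfinish_def pathstart_def)
  have JK': "inside K' \<noteq> {} \<and> bounded (inside K') \<and> inside K' \<union> outside K' = - K' \<and>
     inside K' \<inter> outside K' = {}"
    using Jordan_inside_outside[OF sp' lp'] unfolding K'_def K_def path_image_compose by blast
  have f0: "f z = 0 \<longleftrightarrow> z = z0" for z unfolding f_def by auto
  have contO: "continuous_on (outside K) f" unfolding f_def by (rule inv_cont) (use z0O in auto)
  have cO: "connected (f ` outside K)" using JK contO connected_continuous_image by blast
  have clO: "0 \<in> closure (f ` outside K)"
    unfolding closure_approachable
  proof (intro allI impI)
    fix e :: real assume e: "e > 0"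
    have "\<not> (\<forall>x\<in>outside K. norm x \<le> norm z0 + 1 / e)" using JK unfolding bounded_iff by blast
    then obtain z where z: "z \<in> outside K" "norm z > norm z0 + 1 / e" by (auto simp: not_le)
    have "norm (z - z0) \<ge> norm z - norm z0" by (rule norm_triangle_ineq2)
    then have zz: "norm (z - z0) > 1 / e" using z by simp
    have "1 / e > 0" using e by simp
    then have pz: "norm (z - z0) > 0" using zz by linarith
    have "1 < e * norm (z - z0)" using zz e by (simp add: field_simps)
    then have "norm (f z) < e" unfolding f_def using pz e
      by (simp add: norm_divide divide_less_eq mult.commute)
    then show "\<exists>y\<in>f ` outside K. dist y 0 < e" using z by auto
  qed
  have cO0: "connected (insert 0 (f ` outside K))"
    by (rule connected_intermediate_closure[OF cO]) (use clO closure_subset[of "f ` outside K"] in auto)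
  have O0K': "insert 0 (f ` outside K) \<inter> K' = {}"
  proof -
    have "0 \<notin> K'" unfolding K'_def using f0 z0K by auto
    moreover have "f ` outside K \<inter> f ` K = {}"
      unfolding image_Int[OF injf, symmetric] by (auto simp: outside_def)
    ultimately show ?thesis unfolding K'_def by blast
  qed
  have cI: "connected (f ` (inside K - {z0}))"
    by (rule connected_continuous_image[OF inv_cont[of _ z0, folded f_def]])
       (use JK connected_open_delete[of "inside K" z0] in \<open>auto\<close>)
  have IK': "f ` (inside K - {z0}) \<inter> K' = {}"
    unfolding K'_def image_Int[OF injf, symmetric] using inside_no_overlap[of K] by blast
  have unbI: "\<not> bounded (f ` (inside K - {z0}))"
  proof
    assume "bounded (f ` (inside K - {z0}))"
    then obtain M where M: "\<And>x. x \<in> f ` (inside K - {z0}) \<Longrightarrow> norm x \<le> M" unfolding bounded_iff by blast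
    have oI: "open (inside K)" using JK by blast
    have z0I: "z0 \<in> inside K" using z0 unfolding K_def .
    obtain r where r: "r > 0" "ball z0 r \<subseteq> inside K" using open_contains_ball_eq[OF oI] z0I by blast
    define d where "d = min (r / 2) (1 / (\<bar>M\<bar> + 1))"
    have d: "d > 0" "d < r" "d \<le> 1 / (\<bar>M\<bar> + 1)" unfolding d_def using r by auto
    have "z0 + of_real d \<in> ball z0 r" using d by (simp add: dist_norm)
    then have "z0 + of_real d \<in> inside K - {z0}" using r d by auto
    then have "norm (f (z0 + of_real d)) \<le> M" using M by blast
    moreover have "norm (f (z0 + of_real d)) = 1 / d" unfolding f_def using d by (simp add: norm_divide)
    moreover have "1 / d \<ge> \<bar>M\<bar> + 1"
    proof -
      have "d * (\<bar>M\<bar> + 1) \<le> 1" using d(3) by (simp add: le_divide_eq add_pos_nonneg)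
      then show ?thesis using d(1) by (simp add: le_divide_eq mult.commute)
    qed
    ultimately show False by linarith
  qed
  have IK'o: "f ` (inside K - {z0}) \<subseteq> outside K'"
  proof -
    have "f ` (inside K - {z0}) \<noteq> {}" using unbI by (metis bounded_empty)
    then obtain p where p: "p \<in> f ` (inside K - {z0})" by blast
    have "p \<notin> inside K'"
    proof
      assume "p \<in> inside K'"
      then have "f ` (inside K - {z0}) \<subseteq> inside K'" using conn_in_inside[OF cI IK' p] by blast
      then show False using unbI JK' bounded_subset by blast
    qed
    then have "p \<in> outside K'" using p IK' JK' by blast
    then show ?thesis using conn_in_outside[OF cI IK' p] by blast
  qed
  have cover: "- K' \<subseteq> insert 0 (f ` outside K) \<union> f ` (inside K - {z0})"
  proof
    fix w assume w: "w \<in> - K'"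
    show "w \<in> insert 0 (f ` outside K) \<union> f ` (inside K - {z0})"
    proof (cases "w = 0")
      case False
      define z where "z = z0 + 1 / w"
      have fz: "f z = w" unfolding f_def z_def using False by simp
      have "z \<noteq> z0" unfolding z_def using False by simp
      moreover have "z \<notin> K" using w fz unfolding K'_def by auto
      ultimately show ?thesis using fz JK by blast
    qed simp
  qed
  show ?thesis
  proof (rule ccontr)
    assume nq: "f q \<notin> inside (f ` path_image c)"
    have "f q \<in> insert 0 (f ` outside K)" using q unfolding K_def by blast
    moreover have "f q \<notin> K'" using O0K' q unfolding K_def by blast
    ultimately have "f q \<in> outside K'" using nq JK' unfolding K'_def K_def by blast
    then have "insert 0 (f ` outside K) \<subseteq> outside K'"
      using conn_in_outside[OF cO0 O0K'] \<open>f q \<in> insert 0 (f ` outside K)\<close> by blast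
    then have "- K' \<subseteq> outside K'" using cover IK'o by blast
    then show False using JK' by blast
  qed
qed

lemma k33_image:
  assumes k: "k33 L R g" and z0: "\<And>i j. i < 3 \<Longrightarrow> j < 3 \<Longrightarrow> z0 \<notin> path_image (g i j)"
  defines "f \<equiv> \<lambda>z::complex. 1 / (z - z0)"
  shows "k33 (f \<circ> L) (f \<circ> R) (\<lambda>i j. f \<circ> g i j)"
proof -
  have injf: "inj f" unfolding f_def by (rule inv_inj)
  have arcs: "arc (f \<circ> g i j)" if "i < 3" "j < 3" for i j
  proof -
    have "continuous_on (path_image (g i j)) f" unfolding f_def
      by (rule inv_cont) (use z0 that in auto)
    then have "path (f \<circ> g i j)"
      using k33_arc[OF k that] by (simp add: path_continuous_image arc_imp_path)
    moreover have "inj_on (f \<circ> g i j) {0..1}"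
      using k33_arc[OF k that] injf by (simp add: arc_def comp_inj_on inj_on_subset)
    ultimately show ?thesis by (simp add: arc_def)
  qed
  show ?thesis unfolding k33_def
  proof (intro conjI allI impI)
    fix i j :: nat assume "i < 3" "j < 3"
    then show "arc (f \<circ> g i j)" "pathstart (f \<circ> g i j) = (f \<circ> L) i" "pathfinish (f \<circ> g i j) = (f \<circ> R) j"
      using arcs k33_start[OF k] k33_finish[OF k] by (auto simp: pathstart_def pathfinish_def)
  next
    fix i j l :: nat assume "i < 3" "j < 3" "l < 3" "(f \<circ> L) l \<in> path_image (f \<circ> g i j)"
    then show "l = i" using k33_L[OF k] injf by (auto simp: path_image_compose inj_image_mem_iff)
  next
    fix i j l :: nat assume "i < 3" "j < 3" "l < 3" "(f \<circ> R) l \<in> path_image (f \<circ> g i j)"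
    then show "l = j" using k33_R[OF k] injf by (auto simp: path_image_compose inj_image_mem_iff)
  next
    fix i j i' j' :: nat assume h: "i < 3" "j < 3" "i' < 3" "j' < 3" "i \<noteq> i' \<or> j \<noteq> j'"
    have "path_image (f \<circ> g i j) \<inter> path_image (f \<circ> g i' j') = f ` (path_image (g i j) \<inter> path_image (g i' j'))"
      by (simp add: path_image_compose image_Int[OF injf])
    also have "\<dots> \<subseteq> f ` ((if i = i' then {L i} else {}) \<union> (if j = j' then {R j} else {}))"
      by (rule image_mono[OF k33_int[OF k h]])
    also have "\<dots> = (if i = i' then {(f \<circ> L) i} else {}) \<union> (if j = j' then {(f \<circ> R) j} else {})"
      by auto
    finally show "path_image (f \<circ> g i j) \<inter> path_image (f \<circ> g i' j')
       \<subseteq> (if i = i' then {(f \<circ> L) i} else {}) \<union> (if j = j' then {(f \<circ> R) j} else {})" .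
  qed
qed

lemma k33_false:
  assumes k: "k33 L R g"
  shows False
proof -
  define P where "P j = g 0 j +++ reversepath (g 1 j)" for j
  define J where "J j = path_image (g 0 j) \<union> path_image (g 1 j)" for j
  have Pa: "arc (P j)" "pathstart (P j) = L 0" "pathfinish (P j) = L 1" "path_image (P j) = J j"
    if "j < 3" for j using k33_P[OF k that] unfolding P_def J_def by auto
  have PP: "J 0 \<inter> J 1 = {L 0, L 1}"
    using k33_PP[OF k, of 0 1] unfolding J_def by auto
  define Q where "Q = P 0 +++ reversepath (P 1)"
  have spQ: "simple_path Q" unfolding Q_def
    by (subst simple_path_join_loop_eq) (use Pa PP in \<open>auto simp: arc_reversepath\<close>)
  have lpQ: "pathfinish Q = pathstart Q" unfolding Q_def using Pa by simp
  have piQ: "path_image Q = J 0 \<union> J 1" unfolding Q_def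
    using Pa by (subst path_image_join) auto
  have JQ: "inside (J 0 \<union> J 1) \<noteq> {}"
    using Jordan_inside_outside[OF spQ lpQ] piQ by simp
  show False
  proof (cases "R 2 \<in> inside (J 0 \<union> J 1)")
    case True
    then show False using k33_inside[OF k] unfolding J_def by blast
  next
    case False
    have "R 2 \<notin> J 0 \<union> J 1" using k33_R[OF k, of 0 0 2] k33_R[OF k, of 1 0 2] k33_R[OF k, of 0 1 2]
      k33_R[OF k, of 1 1 2] unfolding J_def by auto
    then have R2o: "R 2 \<in> outside (J 0 \<union> J 1)" using False inside_Un_outside by blast
    obtain z0 where z0: "z0 \<in> inside (J 0 \<union> J 1)" using JQ by blast
    have inJ: "z0 \<notin> path_image (g i j)" if "i < 2" "j < 2" for i j
    proof -
      have "path_image (g i j) \<subseteq> J 0 \<union> J 1" using that unfolding J_def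
        by (auto simp: less_2_cases_iff)
      then show ?thesis using z0 inside_no_overlap by blast
    qed
    have side: "path_image h \<inter> inside (J 0 \<union> J 1) = {}"
      if "arc h" "path_image h \<inter> (J 0 \<union> J 1) \<subseteq> {pathstart h}" "pathfinish h \<in> outside (J 0 \<union> J 1)" for h
      using arc_side[OF that] .
    have g02: "path_image (g 0 2) \<inter> inside (J 0 \<union> J 1) = {}"
    proof (rule side)
      show "path_image (g 0 2) \<inter> (J 0 \<union> J 1) \<subseteq> {pathstart (g 0 2)}"
        using k33_int[OF k, of 0 2 0 0] k33_int[OF k, of 0 2 1 0] k33_int[OF k, of 0 2 0 1]
          k33_int[OF k, of 0 2 1 1] k33_start[OF k, of 0 2] unfolding J_def by auto
    qed (use k33_arc[OF k] k33_finish[OF k] R2o in auto)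
    have g12: "path_image (g 1 2) \<inter> inside (J 0 \<union> J 1) = {}"
    proof (rule side)
      show "path_image (g 1 2) \<inter> (J 0 \<union> J 1) \<subseteq> {pathstart (g 1 2)}"
        using k33_int[OF k, of 1 2 0 0] k33_int[OF k, of 1 2 1 0] k33_int[OF k, of 1 2 0 1]
          k33_int[OF k, of 1 2 1 1] k33_start[OF k, of 1 2] unfolding J_def by auto
    qed (use k33_arc[OF k] k33_finish[OF k] R2o in auto)
    have g22: "path_image (g 2 2) \<inter> inside (J 0 \<union> J 1) = {}"
    proof (rule side)
      show "path_image (g 2 2) \<inter> (J 0 \<union> J 1) \<subseteq> {pathstart (g 2 2)}"
        using k33_disj[OF k, of 2 2 0 0] k33_disj[OF k, of 2 2 1 0] k33_disj[OF k, of 2 2 0 1]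
          k33_disj[OF k, of 2 2 1 1] unfolding J_def by auto
    qed (use k33_arc[OF k] k33_finish[OF k] R2o in auto)
    have "L 2 \<notin> J 0 \<union> J 1" using k33_L[OF k, of 0 0 2] k33_L[OF k, of 1 0 2] k33_L[OF k, of 0 1 2]
      k33_L[OF k, of 1 1 2] unfolding J_def by auto
    moreover have "L 2 \<notin> inside (J 0 \<union> J 1)" using g22 k33_Lin[OF k, of 2 2] by auto
    ultimately have L2o: "L 2 \<in> outside (J 0 \<union> J 1)" using inside_Un_outside by blast
    have g20: "path_image (reversepath (g 2 0)) \<inter> inside (J 0 \<union> J 1) = {}"
    proof (rule side)
      show "path_image (reversepath (g 2 0)) \<inter> (J 0 \<union> J 1) \<subseteq> {pathstart (reversepath (g 2 0))}"
        using k33_int[OF k, of 2 0 0 0] k33_int[OF k, of 2 0 1 0] k33_int[OF k, of 2 0 0 1]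
          k33_int[OF k, of 2 0 1 1] k33_finish[OF k, of 2 0] unfolding J_def by auto
    qed (use k33_arc[OF k] k33_start[OF k] L2o in \<open>auto simp: arc_reversepath\<close>)
    have g21: "path_image (reversepath (g 2 1)) \<inter> inside (J 0 \<union> J 1) = {}"
    proof (rule side)
      show "path_image (reversepath (g 2 1)) \<inter> (J 0 \<union> J 1) \<subseteq> {pathstart (reversepath (g 2 1))}"
        using k33_int[OF k, of 2 1 0 0] k33_int[OF k, of 2 1 1 0] k33_int[OF k, of 2 1 0 1]
          k33_int[OF k, of 2 1 1 1] k33_finish[OF k, of 2 1] unfolding J_def by auto
    qed (use k33_arc[OF k] k33_start[OF k] L2o in \<open>auto simp: arc_reversepath\<close>)
    have z0n: "z0 \<notin> path_image (g i j)" if "i < 3" "j < 3" for i j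
    proof -
      have "i = 0 \<or> i = 1 \<or> i = 2" "j = 0 \<or> j = 1 \<or> j = 2" using that by auto
      then show ?thesis using inJ g02 g12 g22 g20 g21 z0 by auto
    qed
    define f where "f = (\<lambda>z::complex. 1 / (z - z0))"
    have k': "k33 (f \<circ> L) (f \<circ> R) (\<lambda>i j. f \<circ> g i j)"
      unfolding f_def by (rule k33_image[OF k z0n])
    have "f (R 2) \<in> inside (f ` path_image Q)"
      unfolding f_def by (rule inversion_inside[OF spQ lpQ]) (use z0 R2o piQ in auto)
    moreover have "f ` path_image Q = (path_image (f \<circ> g 0 0) \<union> path_image (f \<circ> g 1 0)) \<union>
        (path_image (f \<circ> g 0 1) \<union> path_image (f \<circ> g 1 1))"
      unfolding piQ J_def by (simp add: path_image_compose image_Un)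
    ultimately show False using k33_inside[OF k'] by simp
  qed
qed



lemma planar_no_k33:
  fixes V :: "'a set" and E :: "'a set set" and l r :: "nat \<Rightarrow> 'a"
  assumes pl: "planar_graph V E"
    and lV: "\<And>i. i < 3 \<Longrightarrow> l i \<in> V" and rV: "\<And>j. j < 3 \<Longrightarrow> r j \<in> V"
    and linj: "\<And>i i'. i < 3 \<Longrightarrow> i' < 3 \<Longrightarrow> l i = l i' \<Longrightarrow> i = i'"
    and rinj: "\<And>j j'. j < 3 \<Longrightarrow> j' < 3 \<Longrightarrow> r j = r j' \<Longrightarrow> j = j'"
    and lr: "\<And>i j. i < 3 \<Longrightarrow> j < 3 \<Longrightarrow> l i \<noteq> r j"
    and edges: "\<And>i j. i < 3 \<Longrightarrow> j < 3 \<Longrightarrow> {l i, r j} \<in> E"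
  shows False
proof -
  obtain p :: "'a \<Rightarrow> complex" and \<gamma> :: "'a set \<Rightarrow> real \<Rightarrow> complex" where
    pinj: "inj_on p V" and
    A: "\<forall>e\<in>E. arc (\<gamma> e) \<and> {pathstart (\<gamma> e), pathfinish (\<gamma> e)} = p ` e
                \<and> path_image (\<gamma> e) \<inter> p ` V = p ` e" and
    C: "\<forall>e\<in>E. \<forall>e'\<in>E. e \<noteq> e' \<longrightarrow> path_image (\<gamma> e) \<inter> path_image (\<gamma> e') \<subseteq> p ` (e \<inter> e')"
    using pl unfolding planar_graph_def by (elim exE conjE) (rule that)
  have arcs: "arc (\<gamma> e) \<and> {pathstart (\<gamma> e), pathfinish (\<gamma> e)} = p ` e
                \<and> path_image (\<gamma> e) \<inter> p ` V = p ` e" if "e \<in> E" for e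
    using A that by blast
  have cross: "path_image (\<gamma> e) \<inter> path_image (\<gamma> e') \<subseteq> p ` (e \<inter> e')"
    if "e \<in> E" "e' \<in> E" "e \<noteq> e'" for e e'
    using C that by blast
  define e where "e i j = {l i, r j}" for i j
  define g where "g i j = (if pathstart (\<gamma> (e i j)) = p (l i) then \<gamma> (e i j) else reversepath (\<gamma> (e i j)))" for i j
  have pl_r: "p (l i) \<noteq> p (r j)" if "i < 3" "j < 3" for i j
    using pinj lV rV lr that by (metis inj_on_contraD)
  have pli: "p (l i) = p (l k) \<longleftrightarrow> i = k" if "i < 3" "k < 3" for i k
    using pinj lV linj that by (metis inj_on_contraD)
  have pri: "p (r j) = p (r k) \<longleftrightarrow> j = k" if "j < 3" "k < 3" for j k
    using pinj rV rinj that by (metis inj_on_contraD)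
  have gfacts: "arc (g i j) \<and> pathstart (g i j) = p (l i) \<and> pathfinish (g i j) = p (r j)
     \<and> path_image (g i j) = path_image (\<gamma> (e i j))" if "i < 3" "j < 3" for i j
  proof -
    have E: "e i j \<in> E" using edges that unfolding e_def by blast
    have se: "{pathstart (\<gamma> (e i j)), pathfinish (\<gamma> (e i j))} = {p (l i), p (r j)}"
      using arcs[OF E] unfolding e_def by auto
    show ?thesis
    proof (cases "pathstart (\<gamma> (e i j)) = p (l i)")
      case True
      then have "pathfinish (\<gamma> (e i j)) = p (r j)" using se pl_r[OF that] by (metis doubleton_eq_iff)
      then show ?thesis using True arcs[OF E] unfolding g_def by simp
    next
      case False
      then have "pathstart (\<gamma> (e i j)) = p (r j)" "pathfinish (\<gamma> (e i j)) = p (l i)"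
        using se by (metis doubleton_eq_iff)+
      then show ?thesis using False arcs[OF E] unfolding g_def by (simp add: arc_reversepath)
    qed
  qed
  have "k33 (p \<circ> l) (p \<circ> r) g"
    unfolding k33_def
  proof (intro conjI allI impI)
    fix i j :: nat assume "i < 3" "j < 3"
    then show "arc (g i j)" "pathstart (g i j) = (p \<circ> l) i" "pathfinish (g i j) = (p \<circ> r) j"
      using gfacts by auto
  next
    fix i j k :: nat assume h: "i < 3" "j < 3" "k < 3" "(p \<circ> l) k \<in> path_image (g i j)"
    have E: "e i j \<in> E" using edges h unfolding e_def by blast
    have "p (l k) \<in> path_image (\<gamma> (e i j)) \<inter> p ` V" using h gfacts lV by auto
    then have "p (l k) \<in> {p (l i), p (r j)}" using arcs[OF E] unfolding e_def by auto
    then show "k = i" using pli pl_r h by auto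
  next
    fix i j k :: nat assume h: "i < 3" "j < 3" "k < 3" "(p \<circ> r) k \<in> path_image (g i j)"
    have E: "e i j \<in> E" using edges h unfolding e_def by blast
    have "p (r k) \<in> path_image (\<gamma> (e i j)) \<inter> p ` V" using h gfacts rV by auto
    then have "p (r k) \<in> {p (l i), p (r j)}" using arcs[OF E] unfolding e_def by auto
    then show "k = j" using pri pl_r h by fastforce
  next
    fix i j i' j' :: nat assume h: "i < 3" "j < 3" "i' < 3" "j' < 3" "i \<noteq> i' \<or> j \<noteq> j'"
    have E: "e i j \<in> E" "e i' j' \<in> E" using edges h unfolding e_def by blast+
    have ne: "e i j \<noteq> e i' j'"
      using h linj rinj lr unfolding e_def by (metis doubleton_eq_iff)
    have S1: "path_image (g i j) \<inter> path_image (g i' j') \<subseteq> p ` (e i j \<inter> e i' j')"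
      using cross[OF E ne] gfacts h by simp
    have S2: "e i j \<inter> e i' j' \<subseteq> (if i = i' then {l i} else {}) \<union> (if j = j' then {r j} else {})"
      unfolding e_def using h linj rinj lr by auto
    have S3: "p ` ((if i = i' then {l i} else {}) \<union> (if j = j' then {r j} else {}))
       = (if i = i' then {(p \<circ> l) i} else {}) \<union> (if j = j' then {(p \<circ> r) j} else {})" by auto
    show "path_image (g i j) \<inter> path_image (g i' j')
         \<subseteq> (if i = i' then {(p \<circ> l) i} else {}) \<union> (if j = j' then {(p \<circ> r) j} else {})"
      using S1 image_mono[OF S2, of p] unfolding S3 by (rule subset_trans)
  qed
  then show False by (rule k33_false)
qed



definition tum :: "'a set set \<Rightarrow> 'a set \<Rightarrow> 'a set \<Rightarrow> 'a set \<Rightarrow> 'a set" where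
  "tum E B S e = {s\<in>S. nbrs E s \<inter> B = e}"

definition adjp :: "'a set set \<Rightarrow> 'a set \<Rightarrow> 'a set \<Rightarrow> 'a set \<Rightarrow> ('a \<times> 'a) set" where
  "adjp E B S e = {(a, b). a \<in> tum E B S e \<and> b \<in> tum E B S e \<and> {a, b} \<in> E}"

lemma tumor_tum: "tumor E B S x y = tum E B S {x, y}"
  unfolding tumor_def tum_def by simp

lemma nbrs_iff: "u \<in> nbrs E v \<longleftrightarrow> {u, v} \<in> E"
  unfolding nbrs_def by simp

lemma tumor_graphD:
  assumes "tumor_graph V E B S"
  shows "finite V" "B \<subseteq> V" "S \<subseteq> V" "B \<inter> S = {}" "V = B \<union> S"
    "\<And>s. s \<in> S \<Longrightarrow> card (nbrs E s \<inter> B) \<le> 2"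
    "\<And>e. e \<in> E \<Longrightarrow> e \<subseteq> V \<and> card e = 2"
  using assms unfolding tumor_graph_def simple_graph_def by auto

lemma edge_neq:
  assumes "tumor_graph V E B S" "{a, b} \<in> E" shows "a \<noteq> b"
  using tumor_graphD(7)[OF assms(1) assms(2)] by auto

lemma two_sub_eq:
  assumes "finite X" "card X \<le> 2" "{x, y} \<subseteq> X" "x \<noteq> y"
  shows "X = {x, y}"
proof -
  have "card {x, y} = 2" using assms(4) by simp
  then have "card X = card {x, y}" using assms(2) card_mono[OF assms(1) assms(3)] by simp
  then show ?thesis using card_subset_eq[OF assms(1) assms(3)] by simp
qed

lemma tum_mem:
  assumes tg: "tumor_graph V E B S" and s: "s \<in> S" and "{x, s} \<in> E" "{y, s} \<in> E" "x \<noteq> y" "x \<in> B" "y \<in> B"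
  shows "s \<in> tum E B S {x, y}"
proof -
  have fin: "finite (nbrs E s \<inter> B)" using tumor_graphD(1,2)[OF tg] finite_subset by blast
  have "{x, y} \<subseteq> nbrs E s \<inter> B" using assms by (auto simp: nbrs_iff)
  then have "nbrs E s \<inter> B = {x, y}" using two_sub_eq[OF fin tumor_graphD(6)[OF tg s]] assms(5) by blast
  then show ?thesis using s unfolding tum_def by simp
qed

lemma benign_mem:
  assumes tg: "tumor_graph V E B S" and bn: "benign V E B S"
    and a: "a \<in> S" and b: "b \<in> S" and ab: "{a, b} \<in> E" and xa: "{x, a} \<in> E" and yb: "{y, b} \<in> E"
    and xy: "x \<noteq> y" "x \<in> B" "y \<in> B"
  shows "a \<in> tum E B S {x, y} \<and> b \<in> tum E B S {x, y}"
proof -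
  have "\<exists>x\<in>B. \<exists>y\<in>B. x \<noteq> y \<and> a \<in> tumor E B S x y \<and> b \<in> tumor E B S x y"
    using bn a b ab unfolding benign_def by blast
  then obtain x' y' where x'y': "x' \<in> B" "y' \<in> B" "x' \<noteq> y'" "a \<in> tum E B S {x', y'}" "b \<in> tum E B S {x', y'}"
    unfolding tumor_tum by blast
  have "x \<in> nbrs E a \<inter> B" "y \<in> nbrs E b \<inter> B" using xa yb xy by (auto simp: nbrs_iff)
  then have "{x, y} \<subseteq> {x', y'}" using x'y' unfolding tum_def by auto
  then have "{x', y'} = {x, y}" using two_sub_eq[of "{x', y'}" x y] xy by (simp add: card_insert_if)
  then show ?thesis using x'y' by simp
qed

lemma tum_deg:
  assumes tg: "tumor_graph V E B S" and pl: "planar_graph V E"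
    and e: "e \<subseteq> B" "card e = 2" and a: "a \<in> tum E B S e"
  shows "card {b \<in> tum E B S e. {a, b} \<in> E} \<le> 2"
proof (rule ccontr)
  assume "\<not> ?thesis"
  then have c3: "card {b \<in> tum E B S e. {a, b} \<in> E} \<ge> 3" by simp
  have fin: "finite {b \<in> tum E B S e. {a, b} \<in> E}"
    using tumor_graphD(1,3)[OF tg] unfolding tum_def by (auto intro: finite_subset)
  obtain A where A: "A \<subseteq> {b \<in> tum E B S e. {a, b} \<in> E}" "card A = 3"
    by (rule obtain_subset_with_card_n[OF c3])
  then obtain b0 b1 b2 where bs: "A = {b0, b1, b2}" "b0 \<noteq> b1" "b1 \<noteq> b2" "b0 \<noteq> b2"
    unfolding card_3_iff by blast
  obtain x y where xy: "e = {x, y}" "x \<noteq> y" using e(2) unfolding card_2_iff by blast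
  define l where "l i = (if i = 0 then x else if i = 1 then y else a)" for i :: nat
  define r where "r i = (if i = 0 then b0 else if i = 1 then b1 else b2)" for i :: nat
  have bS: "b0 \<in> S" "b1 \<in> S" "b2 \<in> S" and bt: "b0 \<in> tum E B S e" "b1 \<in> tum E B S e" "b2 \<in> tum E B S e"
    and be: "{a, b0} \<in> E" "{a, b1} \<in> E" "{a, b2} \<in> E"
    using A bs unfolding tum_def by auto
  have aS: "a \<in> S" using a unfolding tum_def by simp
  have xyB: "x \<in> B" "y \<in> B" using e xy by auto
  have BS: "B \<inter> S = {}" "B \<subseteq> V" "S \<subseteq> V" using tumor_graphD[OF tg] by auto
  have xb: "{x, b} \<in> E" "{y, b} \<in> E" if "b \<in> tum E B S e" for b
    using that xy unfolding tum_def by (auto simp: nbrs_iff insert_commute)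
  show False
  proof (rule planar_no_k33[OF pl, of l r])
    show "l i \<in> V" if "i < 3" for i using xyB aS BS unfolding l_def by auto
    show "r j \<in> V" if "j < 3" for j using bS BS unfolding r_def by auto
    show "i = i'" if "i < 3" "i' < 3" "l i = l i'" for i i'
      using that xy xyB aS BS unfolding l_def by (auto split: if_splits)
    show "j = j'" if "j < 3" "j' < 3" "r j = r j'" for j j'
      using that bs unfolding r_def by (auto split: if_splits)
    have "a \<noteq> b0" "a \<noteq> b1" "a \<noteq> b2" using be edge_neq[OF tg] by blast+
    then show "l i \<noteq> r j" if "i < 3" "j < 3" for i j
      using that xyB bS BS unfolding l_def r_def by (auto split: if_splits)
    show "{l i, r j} \<in> E" if "i < 3" "j < 3" for i j
      using that xb[OF bt(1)] xb[OF bt(2)] xb[OF bt(3)] be unfolding l_def r_def by (auto split: if_splits)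
  qed
qed

lemma adjp_card:
  assumes tg: "tumor_graph V E B S" and pl: "planar_graph V E"
    and e: "e \<subseteq> B" "card e = 2"
  shows "card (adjp E B S e) \<le> 2 * card (tum E B S e)"
proof -
  have fin: "finite (tum E B S e)"
    using tumor_graphD(1,3)[OF tg] unfolding tum_def by (auto intro: finite_subset)
  have "adjp E B S e = Sigma (tum E B S e) (\<lambda>a. {b \<in> tum E B S e. {a, b} \<in> E})"
    unfolding adjp_def by auto
  then have "card (adjp E B S e) = (\<Sum>a\<in>tum E B S e. card {b \<in> tum E B S e. {a, b} \<in> E})"
    using fin by (simp add: card_SigmaI)
  also have "\<dots> \<le> (\<Sum>a\<in>tum E B S e. 2)"
    by (rule sum_mono) (rule tum_deg[OF tg pl e])
  finally show ?thesis by simp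
qed



lemma cycle_edges_split: "cycle_edges (Suc k) v = {{v j, v (Suc j)} | j. j < k} \<union> {{v k, v 0}}"
proof -
  have "cycle_edges (Suc k) v = {{v i, v ((i + 1) mod Suc k)} | i. i < Suc k}"
    unfolding cycle_edges_def by simp
  also have "\<dots> = {{v j, v (Suc j)} | j. j < k} \<union> {{v k, v 0}}"
  proof (intro equalityI subsetI)
    fix x assume "x \<in> {{v i, v ((i + 1) mod Suc k)} | i. i < Suc k}"
    then obtain i where i: "i < Suc k" "x = {v i, v ((i + 1) mod Suc k)}" by blast
    show "x \<in> {{v j, v (Suc j)} | j. j < k} \<union> {{v k, v 0}}"
    proof (cases "i = k")
      case True then show ?thesis using i by simp
    next
      case False then have "i < k" using i by simp
      then show ?thesis using i by auto
    qed
  next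
    fix x assume "x \<in> {{v j, v (Suc j)} | j. j < k} \<union> {{v k, v 0}}"
    then show "x \<in> {{v i, v ((i + 1) mod Suc k)} | i. i < Suc k}"
    proof
      assume "x \<in> {{v j, v (Suc j)} | j. j < k}"
      then obtain j where "j < k" "x = {v j, v (Suc j)}" by blast
      then show ?thesis by (intro CollectI exI[of _ j]) auto
    next
      assume "x \<in> {{v k, v 0}}"
      then show ?thesis by (intro CollectI exI[of _ k]) auto
    qed
  qed
  finally show ?thesis .
qed

lemma pairs_split:
  "{{v j, v (Suc j)} | j. j < 2 * k} = (\<Union>i<k. {{v (2 * i), v (2 * i + 1)}, {v (2 * i + 2), v (2 * i + 1)}})"
proof (intro equalityI subsetI)
  fix x assume "x \<in> {{v j, v (Suc j)} | j. j < 2 * k}"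
  then obtain j where j: "j < 2 * k" "x = {v j, v (Suc j)}" by blast
  show "x \<in> (\<Union>i<k. {{v (2 * i), v (2 * i + 1)}, {v (2 * i + 2), v (2 * i + 1)}})"
  proof (cases "even j")
    case True
    then obtain i where "j = 2 * i" by blast
    then show ?thesis using j by auto
  next
    case False
    then obtain i where "j = 2 * i + 1" using oddE by blast
    then show ?thesis using j by (auto simp: insert_commute)
  qed
next
  fix x assume "x \<in> (\<Union>i<k. {{v (2 * i), v (2 * i + 1)}, {v (2 * i + 2), v (2 * i + 1)}})"
  then obtain i where i: "i < k" "x = {v (2 * i), v (2 * i + 1)} \<or> x = {v (2 * i + 2), v (2 * i + 1)}" by blast
  from i(2) show "x \<in> {{v j, v (Suc j)} | j. j < 2 * k}"
  proof
    assume "x = {v (2 * i), v (2 * i + 1)}"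
    then show ?thesis using i by (intro CollectI exI[of _ "2 * i"]) auto
  next
    assume "x = {v (2 * i + 2), v (2 * i + 1)}"
    then show ?thesis using i by (intro CollectI exI[of _ "2 * i + 1"]) (auto simp: insert_commute)
  qed
qed

definition star :: "'a set \<Rightarrow> 'a \<Rightarrow> 'a set set" where
  "star f s = (\<lambda>z. {z, s}) ` f"

definition ends :: "'a set set \<Rightarrow> 'a set" where
  "ends P = {z. card {f\<in>P. z \<in> f} = 1}"

lemma path_edges_eq: "path_edges (Suc m) w = (\<lambda>i. {w i, w (Suc i)}) ` {..<m}"
  unfolding path_edges_def by auto

lemma path_edge_inj:
  assumes inj: "inj_on w {0..<Suc m}" and "i < m" "j < m" "{w i, w (Suc i)} = {w j, w (Suc j)}"
  shows "i = j"
proof -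
  have "w i = w j \<and> w (Suc i) = w (Suc j) \<or> w i = w (Suc j) \<and> w (Suc i) = w j"
    using assms(4) by (metis doubleton_eq_iff)
  then show ?thesis
  proof
    assume "w i = w j \<and> w (Suc i) = w (Suc j)"
    then show ?thesis using inj assms(2,3) by (auto dest: inj_onD)
  next
    assume h: "w i = w (Suc j) \<and> w (Suc i) = w j"
    have "i = Suc j" using inj_onD[OF inj conjunct1[OF h]] assms(2,3) by simp
    moreover have "Suc i = j" using inj_onD[OF inj conjunct2[OF h]] assms(2,3) by simp
    ultimately show ?thesis by simp
  qed
qed

lemma ends_path:
  assumes inj: "inj_on w {0..<Suc m}" and m: "m \<ge> 1"
  shows "ends (path_edges (Suc m) w) = {w 0, w m}"
proof -
  define I where "I z = {i. i < m \<and> (w i = z \<or> w (Suc i) = z)}" for z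
  have finI: "finite (I z)" for z unfolding I_def by auto
  have deg: "card {f \<in> path_edges (Suc m) w. z \<in> f} = card (I z)" for z
  proof -
    have "{f \<in> path_edges (Suc m) w. z \<in> f} = (\<lambda>i. {w i, w (Suc i)}) ` I z"
      unfolding path_edges_eq I_def by auto
    moreover have "inj_on (\<lambda>i. {w i, w (Suc i)}) (I z)"
      by (rule inj_onI) (use path_edge_inj[OF inj] in \<open>auto simp: I_def\<close>)
    ultimately show ?thesis by (simp add: card_image)
  qed
  have wj: "w i = w j \<longleftrightarrow> i = j" if "i \<le> m" "j \<le> m" for i j
    using inj that by (auto dest: inj_onD)
  have I0: "I (w 0) = {0}" unfolding I_def using m wj by auto
  have Im: "I (w m) = {m - 1}" unfolding I_def using m wj by auto
  have Iint: "card (I (w j)) \<ge> 2" if "0 < j" "j < m" for j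
  proof -
    have "{j - 1, j} \<subseteq> I (w j)" unfolding I_def using that by auto
    moreover have "card {j - 1, j} = 2" using that by simp
    ultimately show ?thesis using card_mono[OF finI] by metis
  qed
  show ?thesis
  proof (intro equalityI subsetI)
    fix z assume "z \<in> ends (path_edges (Suc m) w)"
    then have c1: "card (I z) = 1" unfolding ends_def deg by simp
    then obtain i where i: "I z = {i}" using card_1_singletonE by blast
    then have i': "i < m" "w i = z \<or> w (Suc i) = z" unfolding I_def by auto
    from i'(2) show "z \<in> {w 0, w m}"
    proof
      assume z: "w i = z"
      show ?thesis
      proof (cases "i = 0")
        case False then show ?thesis using Iint[of i] i'(1) z c1 by simp
      qed (use z in simp)
    next
      assume z: "w (Suc i) = z"
      show ?thesis
      proof (cases "Suc i = m")
        case False then show ?thesis using Iint[of "Suc i"] i'(1) z c1 by simp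
      qed (use z in simp)
    qed
  next
    fix z assume "z \<in> {w 0, w m}"
    then show "z \<in> ends (path_edges (Suc m) w)" unfolding ends_def deg using I0 Im by auto
  qed
qed



definition goodv :: "'a set \<Rightarrow> 'a set set \<Rightarrow> 'a set \<Rightarrow> 'a set \<Rightarrow> nat \<Rightarrow> (nat \<Rightarrow> 'a) \<Rightarrow> bool" where
  "goodv V E B S m v \<longleftrightarrow> inj_on v {0..<2*m+1} \<and> v ` {0..<2*m+1} \<subseteq> V
      \<and> (\<forall>i<2*m. even i \<longrightarrow> v i \<in> B) \<and> (\<forall>i<2*m. odd i \<longrightarrow> v i \<in> S) \<and> cycle_edges (2*m+1) v \<subseteq> E"

lemma good_cycles_eq: "good_cycles V E B S m = {cycle_edges (2*m+1) v | v. goodv V E B S m v}"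
  unfolding good_cycles_def goodv_def by blast

lemma goodv_edges:
  assumes "goodv V E B S m v"
  shows "\<And>i. i < 2 * m \<Longrightarrow> {v i, v (Suc i)} \<in> E" "{v (2 * m), v 0} \<in> E"
  using assms cycle_edges_split[of "2 * m" v] unfolding goodv_def by auto

lemma goodv_inj:
  assumes "goodv V E B S m v" "i \<le> 2 * m" "j \<le> 2 * m"
  shows "v i = v j \<longleftrightarrow> i = j"
  using assms unfolding goodv_def by (auto dest: inj_onD)

definition F1 :: "'a set set \<times> ('a set \<Rightarrow> 'a) \<Rightarrow> 'a set set" where
  "F1 = (\<lambda>(P, \<sigma>). (\<Union>f\<in>P. star f (\<sigma> f)) \<union> {ends P})"

lemma star2: "star {a, b} s = {{a, s}, {b, s}}"
  unfolding star_def by auto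

lemma path_case:
  assumes tg: "tumor_graph V E B S" and m: "m \<ge> 1" and gv: "goodv V E B S m v" and last: "v (2 * m) \<in> B"
  shows "cycle_edges (2 * m + 1) v \<in> F1 ` Sigma (path_copies B (Suc m)) (\<lambda>P. PiE P (tum E B S))"
proof -
  define w where "w i = v (2 * i)" for i
  have injw: "inj_on w {0..<Suc m}"
    by (rule inj_onI) (use goodv_inj[OF gv] in \<open>auto simp: w_def\<close>)
  have wB: "w i \<in> B" if "i \<le> m" for i
  proof (cases "i = m")
    case True then show ?thesis using last by (simp add: w_def)
  next
    case False then show ?thesis using gv that unfolding goodv_def w_def by auto
  qed
  define P where "P = path_edges (Suc m) w"
  have PC: "P \<in> path_copies B (Suc m)"
    unfolding P_def path_copies_def using injw wB by fastforce
  define idx where "idx f = (THE i. i < m \<and> f = {w i, w (Suc i)})" for f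
  have idx: "idx {w i, w (Suc i)} = i" if "i < m" for i
    unfolding idx_def by (rule the_equality) (use that path_edge_inj[OF injw] in auto)
  define \<sigma> where "\<sigma> = restrict (\<lambda>f. v (2 * idx f + 1)) P"
  have \<sigma>i: "\<sigma> {w i, w (Suc i)} = v (2 * i + 1)" if "i < m" for i
    unfolding \<sigma>_def P_def path_edges_eq using idx[OF that] that by auto
  have wne: "w i \<noteq> w (Suc i)" if "i < m" for i using injw that by (auto dest: inj_onD)
  have \<sigma>P: "\<sigma> \<in> PiE P (tum E B S)"
  proof
    fix f assume "f \<in> P"
    then obtain i where i: "i < m" "f = {w i, w (Suc i)}" unfolding P_def path_edges_eq by blast
    have s: "v (2 * i + 1) \<in> S" using gv i unfolding goodv_def by auto
    have e1: "{w i, v (2 * i + 1)} \<in> E" using goodv_edges(1)[OF gv, of "2 * i"] i unfolding w_def by simp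
    have e2: "{w (Suc i), v (2 * i + 1)} \<in> E"
      using goodv_edges(1)[OF gv, of "2 * i + 1"] i unfolding w_def by (simp add: insert_commute)
    show "\<sigma> f \<in> tum E B S f"
      using tum_mem[OF tg s e1 e2 wne wB wB] i \<sigma>i by simp
  next
    fix f assume "f \<notin> P" then show "\<sigma> f = undefined" unfolding \<sigma>_def by simp
  qed
  have U: "(\<Union>f\<in>P. star f (\<sigma> f)) = {{v j, v (Suc j)} | j. j < 2 * m}"
  proof -
    have "(\<Union>f\<in>P. star f (\<sigma> f)) = (\<Union>i<m. star {w i, w (Suc i)} (\<sigma> {w i, w (Suc i)}))"
      unfolding P_def path_edges_eq by simp
    also have "\<dots> = (\<Union>i<m. {{v (2 * i), v (2 * i + 1)}, {v (2 * i + 2), v (2 * i + 1)}})"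
    proof (rule SUP_cong)
      fix i assume "i \<in> {..<m}"
      then have im: "i < m" by simp
      show "star {w i, w (Suc i)} (\<sigma> {w i, w (Suc i)}) = {{v (2 * i), v (2 * i + 1)}, {v (2 * i + 2), v (2 * i + 1)}}"
        unfolding star2 \<sigma>i[OF im] by (simp add: w_def)
    qed simp
    finally show ?thesis by (simp add: pairs_split)
  qed
  have en: "ends P = {v 0, v (2 * m)}" unfolding P_def using ends_path[OF injw m] by (simp add: w_def)
  have "F1 (P, \<sigma>) = cycle_edges (2 * m + 1) v"
    unfolding F1_def using U en cycle_edges_split[of "2 * m" v] by auto
  then show ?thesis using PC \<sigma>P by force
qed



definition ori :: "'a set \<Rightarrow> 'a \<times> 'a" where
  "ori e = (SOME p. e = {fst p, snd p})"

lemma ori: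
  assumes "card e = 2"
  shows "e = {fst (ori e), snd (ori e)}" "fst (ori e) \<noteq> snd (ori e)"
proof -
  obtain x y where xy: "e = {x, y}" "x \<noteq> y" using assms unfolding card_2_iff by blast
  then have "\<exists>p. e = {fst p, snd p}" by (intro exI[of _ "(x, y)"]) simp
  then have *: "e = {fst (ori e), snd (ori e)}" unfolding ori_def by (rule someI_ex)
  then show "e = {fst (ori e), snd (ori e)}" .
  show "fst (ori e) \<noteq> snd (ori e)"
  proof
    assume "fst (ori e) = snd (ori e)"
    then have "e = {fst (ori e)}" using * by simp
    then have "card e = card {fst (ori e)}" by (rule arg_cong)
    then have "card e = 1" by simp
    then show False using assms by simp
  qed
qed

definition F2 :: "'a set set \<times> 'a set \<times> ('a set \<Rightarrow> 'a) \<times> ('a \<times> 'a) \<Rightarrow> 'a set set" where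
  "F2 = (\<lambda>(C, e, \<sigma>, ab). (\<Union>f\<in>C - {e}. star f (\<sigma> f)) \<union>
      {{fst (ori e), fst ab}, {fst ab, snd ab}, {snd ab, snd (ori e)}})"

definition D2 :: "'a set set \<Rightarrow> 'a set \<Rightarrow> 'a set \<Rightarrow> nat \<Rightarrow> ('a set set \<times> 'a set \<times> ('a set \<Rightarrow> 'a) \<times> ('a \<times> 'a)) set" where
  "D2 E B S m = Sigma (cycle_copies B m) (\<lambda>C. Sigma C (\<lambda>e. PiE (C - {e}) (tum E B S) \<times> adjp E B S e))"

lemma Suc_set: "{g j | j. j < Suc n} = insert (g n) {g j | j. j < n}"
  by (auto simp: less_Suc_eq)

lemma cyc_case:
  assumes tg: "tumor_graph V E B S" and bn: "benign V E B S" and m: "m \<ge> 3"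
    and gv: "goodv V E B S m v" and last: "v (2 * m) \<in> S"
  shows "cycle_edges (2 * m + 1) v \<in> F2 ` D2 E B S m"
proof -
  define k where "k = m - 1"
  have mk: "m = Suc k" "k \<ge> 2" using m unfolding k_def by auto
  define w where "w i = v (2 * i)" for i
  have injw: "inj_on w {0..<Suc k}"
    by (rule inj_onI) (use goodv_inj[OF gv] mk in \<open>auto simp: w_def\<close>)
  have wB: "w i \<in> B" if "i \<le> k" for i using gv that mk unfolding goodv_def w_def by auto
  define C where "C = cycle_edges m w"
  have CC: "C \<in> cycle_copies B m"
    unfolding C_def cycle_copies_def using injw wB mk by fastforce
  define e where "e = {w k, w 0}"
  have Csplit: "C = path_edges (Suc k) w \<union> {e}"
    unfolding C_def e_def mk cycle_edges_split path_edges_def by auto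
  have eC: "e \<in> C" using Csplit by simp
  have wij: "w i = w j \<longleftrightarrow> i = j" if "i \<le> k" "j \<le> k" for i j
    using injw that by (auto dest: inj_onD)
  have ne: "{w j, w (Suc j)} \<noteq> e" if "j < k" for j
  proof
    assume "{w j, w (Suc j)} = e"
    then have "w j = w k \<and> w (Suc j) = w 0 \<or> w j = w 0 \<and> w (Suc j) = w k"
      unfolding e_def by (metis doubleton_eq_iff)
    then show False using wij that mk by auto
  qed
  have Ce: "C - {e} = path_edges (Suc k) w"
    using Csplit ne unfolding path_edges_eq by auto
  define idx where "idx f = (THE i. i < k \<and> f = {w i, w (Suc i)})" for f
  have idx: "idx {w i, w (Suc i)} = i" if "i < k" for i
    unfolding idx_def by (rule the_equality) (use that path_edge_inj[OF injw] in auto)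
  define \<sigma> where "\<sigma> = restrict (\<lambda>f. v (2 * idx f + 1)) (C - {e})"
  have \<sigma>i: "\<sigma> {w i, w (Suc i)} = v (2 * i + 1)" if "i < k" for i
    unfolding \<sigma>_def Ce path_edges_eq using idx[OF that] that by auto
  have wne: "w i \<noteq> w (Suc i)" if "i < k" for i using wij that by simp
  have \<sigma>P: "\<sigma> \<in> PiE (C - {e}) (tum E B S)"
  proof
    fix f assume "f \<in> C - {e}"
    then obtain i where i: "i < k" "f = {w i, w (Suc i)}" unfolding Ce path_edges_eq by blast
    have s: "v (2 * i + 1) \<in> S" using gv i mk unfolding goodv_def by auto
    have e1: "{w i, v (2 * i + 1)} \<in> E" using goodv_edges(1)[OF gv, of "2 * i"] i mk unfolding w_def by simp
    have e2: "{w (Suc i), v (2 * i + 1)} \<in> E"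
      using goodv_edges(1)[OF gv, of "2 * i + 1"] i mk unfolding w_def by (simp add: insert_commute)
    show "\<sigma> f \<in> tum E B S f"
      using tum_mem[OF tg s e1 e2 wne wB wB] i \<sigma>i by simp
  next
    fix f assume "f \<notin> C - {e}" then show "\<sigma> f = undefined" unfolding \<sigma>_def by auto
  qed
  define a where "a = v (2 * k + 1)"
  define b where "b = v (2 * k + 2)"
  have aS: "a \<in> S" using gv mk unfolding goodv_def a_def by auto
  have bS: "b \<in> S" using last mk unfolding b_def by simp
  have ab: "{a, b} \<in> E" using goodv_edges(1)[OF gv, of "2 * k + 1"] mk unfolding a_def b_def by simp
  have xa: "{w k, a} \<in> E" using goodv_edges(1)[OF gv, of "2 * k"] mk unfolding a_def w_def by simp
  have yb: "{w 0, b} \<in> E" using goodv_edges(2)[OF gv] mk unfolding b_def w_def by (simp add: insert_commute)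
  have xy: "w k \<noteq> w 0" using wij mk by simp
  have abt: "a \<in> tum E B S e \<and> b \<in> tum E B S e"
    using benign_mem[OF tg bn aS bS ab xa yb xy wB wB] unfolding e_def by simp
  have ce: "card e = 2" using xy unfolding e_def by simp
  have U: "(\<Union>f\<in>C - {e}. star f (\<sigma> f)) = {{v j, v (Suc j)} | j. j < 2 * k}"
  proof -
    have "(\<Union>f\<in>C - {e}. star f (\<sigma> f)) = (\<Union>i<k. star {w i, w (Suc i)} (\<sigma> {w i, w (Suc i)}))"
      unfolding Ce path_edges_eq by simp
    also have "\<dots> = (\<Union>i<k. {{v (2 * i), v (2 * i + 1)}, {v (2 * i + 2), v (2 * i + 1)}})"
    proof (rule SUP_cong)
      fix i assume "i \<in> {..<k}"
      then have im: "i < k" by simp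
      show "star {w i, w (Suc i)} (\<sigma> {w i, w (Suc i)}) = {{v (2 * i), v (2 * i + 1)}, {v (2 * i + 2), v (2 * i + 1)}}"
        unfolding star2 \<sigma>i[OF im] by (simp add: w_def)
    qed simp
    finally show ?thesis by (simp add: pairs_split)
  qed
  have cyc: "cycle_edges (2 * m + 1) v = {{v j, v (Suc j)} | j. j < 2 * k} \<union>
      {{w k, a}, {a, b}, {b, w 0}}"
  proof -
    have "cycle_edges (2 * m + 1) v = {{v j, v (Suc j)} | j. j < Suc (Suc (2 * k))} \<union> {{v (2 * m), v 0}}"
      using cycle_edges_split[of "2 * m" v] mk by simp
    also have "\<dots> = {{v j, v (Suc j)} | j. j < 2 * k} \<union> {{w k, a}, {a, b}, {b, w 0}}"
      unfolding Suc_set a_def b_def w_def mk by auto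
    finally show ?thesis .
  qed
  have oe: "e = {fst (ori e), snd (ori e)}" "fst (ori e) \<noteq> snd (ori e)" using ori[OF ce] by auto
  show ?thesis
  proof (cases "fst (ori e) = w k")
    case True
    then have so: "snd (ori e) = w 0" using oe unfolding e_def by (metis doubleton_eq_iff)
    have "F2 (C, e, \<sigma>, (a, b)) = cycle_edges (2 * m + 1) v"
      unfolding F2_def using U cyc True so by simp
    moreover have "(C, e, \<sigma>, (a, b)) \<in> D2 E B S m"
      unfolding D2_def adjp_def using CC eC \<sigma>P abt ab by auto
    ultimately show ?thesis by force
  next
    case False
    then have fo: "fst (ori e) = w 0" "snd (ori e) = w k" using oe unfolding e_def by (metis doubleton_eq_iff)+
    have "F2 (C, e, \<sigma>, (b, a)) = cycle_edges (2 * m + 1) v"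
      unfolding F2_def using U cyc fo by (auto simp: insert_commute)
    moreover have "(C, e, \<sigma>, (b, a)) \<in> D2 E B S m"
      unfolding D2_def adjp_def using CC eC \<sigma>P abt ab by (auto simp: insert_commute)
    ultimately show ?thesis by force
  qed
qed



definition F3 :: "'a set \<times> 'a \<times> ('a \<times> 'a) \<Rightarrow> 'a set set" where
  "F3 = (\<lambda>(e, s, ab). star e s \<union> {{snd (ori e), fst ab}, {fst ab, snd ab}, {snd ab, fst (ori e)}})"

definition D3 :: "'a set set \<Rightarrow> 'a set \<Rightarrow> 'a set \<Rightarrow> ('a set \<times> 'a \<times> ('a \<times> 'a)) set" where
  "D3 E B S = Sigma {e \<in> complete_edges B. tum E B S e \<noteq> {}} (\<lambda>e. tum E B S e \<times> adjp E B S e)"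

lemma cycle_edges_5: "cycle_edges 5 v = {{v 0, v 1}, {v 1, v 2}, {v 2, v 3}, {v 3, v 4}, {v 4, v 0}}"
proof -
  have "cycle_edges 5 v = {{v j, v (Suc j)} | j. j < Suc (Suc (Suc (Suc 0)))} \<union> {{v 4, v 0}}"
    using cycle_edges_split[of 4 v] by (simp add: eval_nat_numeral)
  also have "\<dots> = {{v 0, v 1}, {v 1, v 2}, {v 2, v 3}, {v 3, v 4}, {v 4, v 0}}"
    unfolding Suc_set by (auto simp: eval_nat_numeral)
  finally show ?thesis .
qed

lemma cyc2_case:
  assumes tg: "tumor_graph V E B S" and bn: "benign V E B S"
    and gv: "goodv V E B S 2 v" and last: "v 4 \<in> S"
  shows "cycle_edges 5 v \<in> F3 ` D3 E B S"
proof -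
  have vB: "v 0 \<in> B" "v 2 \<in> B" and vS: "v 1 \<in> S" "v 3 \<in> S" using gv unfolding goodv_def by auto
  have ed: "{v 0, v 1} \<in> E" "{v 1, v 2} \<in> E" "{v 2, v 3} \<in> E" "{v 3, v 4} \<in> E" "{v 4, v 0} \<in> E"
    using goodv_edges[OF gv] by (auto simp: eval_nat_numeral)
  have ne: "v 0 \<noteq> v 2" using goodv_inj[OF gv, of 0 2] by simp
  define e where "e = {v 0, v 2}"
  have s: "v 1 \<in> tum E B S e"
    unfolding e_def by (rule tum_mem[OF tg vS(1)]) (use ed ne vB in \<open>auto simp: insert_commute\<close>)
  have abt: "v 3 \<in> tum E B S e \<and> v 4 \<in> tum E B S e"
    using benign_mem[OF tg bn vS(2) last ed(4) ed(3), of "v 0"] ed(5) ne vB unfolding e_def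
    by (auto simp: insert_commute)
  have ce: "card e = 2" using ne unfolding e_def by simp
  have eD: "e \<in> {e \<in> complete_edges B. tum E B S e \<noteq> {}}"
    using ce vB s unfolding e_def complete_edges_def by auto
  have oe: "e = {fst (ori e), snd (ori e)}" "fst (ori e) \<noteq> snd (ori e)" using ori[OF ce] by auto
  have st: "star e (v 1) = {{v 0, v 1}, {v 2, v 1}}" unfolding e_def star2 ..
  show ?thesis
  proof (cases "fst (ori e) = v 0")
    case True
    then have so: "snd (ori e) = v 2" using oe unfolding e_def by (metis doubleton_eq_iff)
    have "F3 (e, v 1, (v 3, v 4)) = cycle_edges 5 v"
      unfolding F3_def cycle_edges_5 using st True so by (auto simp: insert_commute)
    moreover have "(e, v 1, (v 3, v 4)) \<in> D3 E B S"
      unfolding D3_def adjp_def using eD s abt ed by auto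
    ultimately show ?thesis by force
  next
    case False
    then have fo: "fst (ori e) = v 2" "snd (ori e) = v 0" using oe unfolding e_def by (metis doubleton_eq_iff)+
    have "F3 (e, v 1, (v 4, v 3)) = cycle_edges 5 v"
      unfolding F3_def cycle_edges_5 using st fo by (auto simp: insert_commute)
    moreover have "(e, v 1, (v 4, v 3)) \<in> D3 E B S"
      unfolding D3_def adjp_def using eD s abt ed by (auto simp: insert_commute)
    ultimately show ?thesis by force
  qed
qed



lemma path_copies_props:
  assumes "P \<in> path_copies B (Suc m)"
  shows "finite P" "P \<subseteq> complete_edges B" "card P \<le> m"
proof -
  obtain w where w: "P = path_edges (Suc m) w" "inj_on w {0..<Suc m}" "w ` {0..<Suc m} \<subseteq> B"
    using assms unfolding path_copies_def by blast
  have P: "P = (\<lambda>i. {w i, w (Suc i)}) ` {..<m}" using w(1) path_edges_eq by simp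
  show "finite P" unfolding P by simp
  show "card P \<le> m" unfolding P by (rule order_trans[OF card_image_le]) simp_all
  show "P \<subseteq> complete_edges B"
  proof
    fix f assume "f \<in> P"
    then obtain i where i: "i < m" "f = {w i, w (Suc i)}" using P by blast
    have "w i \<noteq> w (Suc i)"
    proof
      assume "w i = w (Suc i)"
      from inj_onD[OF w(2) this] i show False by simp
    qed
    moreover have "w i \<in> B" "w (Suc i) \<in> B" using w(3) i by auto
    ultimately show "f \<in> complete_edges B" using i unfolding complete_edges_def by auto
  qed
qed

lemma cycle_copies_props:
  assumes "C \<in> cycle_copies B m" "m \<ge> 2"
  shows "finite C" "C \<subseteq> complete_edges B" "card C \<le> m"
proof -
  obtain w where w: "C = cycle_edges m w" "inj_on w {0..<m}" "w ` {0..<m} \<subseteq> B"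
    using assms unfolding cycle_copies_def by blast
  have C: "C = (\<lambda>i. {w i, w ((i + 1) mod m)}) ` {..<m}" using w(1) unfolding cycle_edges_def by auto
  show "finite C" unfolding C by simp
  show "card C \<le> m" unfolding C by (rule order_trans[OF card_image_le]) simp_all
  show "C \<subseteq> complete_edges B"
  proof
    fix f assume "f \<in> C"
    then obtain i where i: "i < m" "f = {w i, w ((i + 1) mod m)}" using C by blast
    have lt: "(i + 1) mod m < m" using i by simp
    have "i \<noteq> (i + 1) mod m"
    proof (cases "i + 1 < m")
      case True then show ?thesis by simp
    next
      case False then have "i + 1 = m" using i by simp
      then show ?thesis using assms(2) by auto
    qed
    then have "w i \<noteq> w ((i + 1) mod m)"
      using inj_onD[OF w(2), of i "(i + 1) mod m"] i lt by auto
    moreover have "w i \<in> B" "w ((i + 1) mod m) \<in> B" using w(3) i lt by auto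
    ultimately show "f \<in> complete_edges B" using i unfolding complete_edges_def by auto
  qed
qed

lemma finite_path_copies:
  assumes "finite B" shows "finite (path_copies B k)"
proof (rule finite_subset)
  show "path_copies B k \<subseteq> Pow (Pow B)"
    unfolding path_copies_def path_edges_def by fastforce
qed (use assms in simp)

lemma finite_cycle_copies:
  assumes "finite B" shows "finite (cycle_copies B k)"
proof (rule finite_subset)
  show "cycle_copies B k \<subseteq> Pow (Pow B)"
  proof
    fix C assume "C \<in> cycle_copies B k"
    then obtain w where w: "C = cycle_edges k w" "w ` {0..<k} \<subseteq> B"
      unfolding cycle_copies_def by blast
    have "{w i, w ((i + 1) mod k)} \<subseteq> B" if "i < k" for i
      using w(2) that by (auto simp: image_subset_iff)
    then show "C \<in> Pow (Pow B)" using w(1) unfolding cycle_edges_def by auto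
  qed
qed (use assms in simp)



lemma prod_bound:
  fixes \<mu> :: "'a set pmf" and T n :: nat
  assumes P: "finite P" "P \<subseteq> complete_edges B" "card P \<le> k" and T: "T > 0" "T \<le> n"
    and pm: "\<And>f. f \<in> complete_edges B \<Longrightarrow> pmf \<mu> f = real (card (tum E B S f)) / real T"
  shows "real (\<Prod>f\<in>P. card (tum E B S f)) \<le> real n ^ k * (\<Prod>f\<in>P. pmf \<mu> f)"
proof -
  have "real (\<Prod>f\<in>P. card (tum E B S f)) = (\<Prod>f\<in>P. real T * pmf \<mu> f)"
    unfolding of_nat_prod by (rule prod.cong) (use P(2) pm T in auto)
  also have "\<dots> = real T ^ card P * (\<Prod>f\<in>P. pmf \<mu> f)"
    by (simp add: prod.distrib)
  also have "\<dots> \<le> real n ^ k * (\<Prod>f\<in>P. pmf \<mu> f)"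
  proof (rule mult_right_mono)
    have "real T ^ card P \<le> real T ^ k" using T P(3) by (intro power_increasing) auto
    also have "\<dots> \<le> real n ^ k" using T by (intro power_mono) auto
    finally show "real T ^ card P \<le> real n ^ k" .
  qed (simp add: prod_nonneg)
  finally show ?thesis .
qed

lemma finite_tum: "finite S \<Longrightarrow> finite (tum E B S e)"
  unfolding tum_def by simp

lemma finite_adjp: "finite S \<Longrightarrow> finite (adjp E B S e)"
  by (rule finite_subset[of _ "tum E B S e \<times> tum E B S e"]) (auto simp: adjp_def finite_tum)

lemma card_D1_bound:
  fixes \<mu> :: "'a set pmf" and T n :: nat
  assumes fin: "finite B" "finite S" and T: "T > 0" "T \<le> n"
    and pm: "\<And>f. f \<in> complete_edges B \<Longrightarrow> pmf \<mu> f = real (card (tum E B S f)) / real T"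
  shows "real (card (Sigma (path_copies B (Suc m)) (\<lambda>P. PiE P (tum E B S)))) \<le>
     real n ^ m * beta \<mu> (path_copies B (Suc m))"
proof -
  have "card (Sigma (path_copies B (Suc m)) (\<lambda>P. PiE P (tum E B S))) =
      (\<Sum>P\<in>path_copies B (Suc m). \<Prod>f\<in>P. card (tum E B S f))"
  proof -
    have "card (Sigma (path_copies B (Suc m)) (\<lambda>P. PiE P (tum E B S))) =
      (\<Sum>P\<in>path_copies B (Suc m). card (PiE P (tum E B S)))"
      by (rule card_SigmaI) (use finite_path_copies[OF fin(1)] path_copies_props(1) in
          \<open>auto intro!: finite_PiE simp: finite_tum fin\<close>)
    also have "\<dots> = (\<Sum>P\<in>path_copies B (Suc m). \<Prod>f\<in>P. card (tum E B S f))"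
      by (rule sum.cong) (auto simp: card_PiE dest: path_copies_props(1))
    finally show ?thesis .
  qed
  then have "real (card (Sigma (path_copies B (Suc m)) (\<lambda>P. PiE P (tum E B S)))) =
      (\<Sum>P\<in>path_copies B (Suc m). real (\<Prod>f\<in>P. card (tum E B S f)))" by simp
  also have "\<dots> \<le> (\<Sum>P\<in>path_copies B (Suc m). real n ^ m * (\<Prod>f\<in>P. pmf \<mu> f))"
    by (rule sum_mono, rule prod_bound[OF _ _ _ T pm]) (auto dest: path_copies_props)
  also have "\<dots> = real n ^ m * beta \<mu> (path_copies B (Suc m))"
    unfolding beta_def by (simp add: sum_distrib_left)
  finally show ?thesis .
qed

lemma card_D2_bound:
  fixes \<mu> :: "'a set pmf" and T n :: nat
  assumes tg: "tumor_graph V E B S" and pl: "planar_graph V E" and m: "m \<ge> 2"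
    and fin: "finite B" "finite S" and T: "T > 0" "T \<le> n"
    and pm: "\<And>f. f \<in> complete_edges B \<Longrightarrow> pmf \<mu> f = real (card (tum E B S f)) / real T"
  shows "real (card (D2 E B S m)) \<le> 2 * real m * real n ^ m * beta \<mu> (cycle_copies B m)"
proof -
  let ?t = "\<lambda>f. card (tum E B S f)"
  have inner: "card (Sigma C (\<lambda>e. PiE (C - {e}) (tum E B S) \<times> adjp E B S e)) \<le> 2 * m * (\<Prod>f\<in>C. ?t f)"
    if C: "C \<in> cycle_copies B m" for C
  proof -
    note Cp = cycle_copies_props[OF C m]
    have "card (Sigma C (\<lambda>e. PiE (C - {e}) (tum E B S) \<times> adjp E B S e)) =
        (\<Sum>e\<in>C. (\<Prod>f\<in>C - {e}. ?t f) * card (adjp E B S e))"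
      using Cp(1) by (simp add: card_SigmaI finite_PiE finite_tum finite_adjp fin card_PiE card_cartesian_product)
    also have "\<dots> \<le> (\<Sum>e\<in>C. 2 * (\<Prod>f\<in>C. ?t f))"
    proof (rule sum_mono)
      fix e assume e: "e \<in> C"
      have eB: "e \<subseteq> B" "card e = 2" using Cp(2) e unfolding complete_edges_def by auto
      have "(\<Prod>f\<in>C - {e}. ?t f) * card (adjp E B S e) \<le> (\<Prod>f\<in>C - {e}. ?t f) * (2 * ?t e)"
        by (rule mult_left_mono[OF adjp_card[OF tg pl eB]]) simp
      also have "\<dots> = 2 * (\<Prod>f\<in>C. ?t f)"
        using prod.remove[OF Cp(1) e, of ?t] by simp
      finally show "(\<Prod>f\<in>C - {e}. ?t f) * card (adjp E B S e) \<le> 2 * (\<Prod>f\<in>C. ?t f)" .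
    qed
    also have "\<dots> = card C * (2 * (\<Prod>f\<in>C. ?t f))" by simp
    also have "\<dots> \<le> m * (2 * (\<Prod>f\<in>C. ?t f))" using Cp(3) by (rule mult_right_mono) simp
    finally show ?thesis by simp
  qed
  have "card (D2 E B S m) = (\<Sum>C\<in>cycle_copies B m. card (Sigma C (\<lambda>e. PiE (C - {e}) (tum E B S) \<times> adjp E B S e)))"
    unfolding D2_def using finite_cycle_copies[OF fin(1)] cycle_copies_props(1)[OF _ m]
    by (intro card_SigmaI) (auto simp: finite_PiE finite_tum finite_adjp fin intro!: finite_SigmaI finite_cartesian_product)
  also have "\<dots> \<le> (\<Sum>C\<in>cycle_copies B m. 2 * m * (\<Prod>f\<in>C. ?t f))"
    by (rule sum_mono) (rule inner)
  finally have "real (card (D2 E B S m)) \<le> real (\<Sum>C\<in>cycle_copies B m. 2 * m * (\<Prod>f\<in>C. ?t f))"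
    by (simp only: of_nat_le_iff)
  also have "\<dots> = (\<Sum>C\<in>cycle_copies B m. 2 * real m * real (\<Prod>f\<in>C. ?t f))"
    by (simp only: of_nat_sum of_nat_mult of_nat_numeral)
  also have "\<dots> \<le> (\<Sum>C\<in>cycle_copies B m. 2 * real m * (real n ^ m * (\<Prod>f\<in>C. pmf \<mu> f)))"
  proof (rule sum_mono)
    fix C assume C: "C \<in> cycle_copies B m"
    note Cp = cycle_copies_props[OF C m]
    show "2 * real m * real (\<Prod>f\<in>C. ?t f) \<le> 2 * real m * (real n ^ m * (\<Prod>f\<in>C. pmf \<mu> f))"
      by (rule mult_left_mono[OF prod_bound[OF Cp T pm]]) auto
  qed
  also have "\<dots> = 2 * real m * real n ^ m * beta \<mu> (cycle_copies B m)"
    unfolding beta_def by (simp add: sum_distrib_left mult.assoc)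
  finally show ?thesis .
qed

lemma card_D3_bound:
  fixes \<mu> :: "'a set pmf" and T n :: nat
  assumes tg: "tumor_graph V E B S" and pl: "planar_graph V E"
    and fin: "finite B" "finite S" and T: "T > 0" "T \<le> n"
    and pm: "\<And>f. f \<in> complete_edges B \<Longrightarrow> pmf \<mu> f = real (card (tum E B S f)) / real T"
    and Es: "set_pmf \<mu> = {e \<in> complete_edges B. tum E B S e \<noteq> {}}"
  shows "real (card (D3 E B S)) \<le> 2 * (\<Sum>e\<in>set_pmf \<mu>. (pmf \<mu> e)^2) * real n ^ 2"
proof -
  let ?t = "\<lambda>f. card (tum E B S f)"
  have finE: "finite (complete_edges B)"
    by (rule finite_subset[of _ "Pow B"]) (auto simp: complete_edges_def fin)
  have finE': "finite {e \<in> complete_edges B. tum E B S e \<noteq> {}}" using finE by simp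
  have "card (D3 E B S) = (\<Sum>e\<in>set_pmf \<mu>. ?t e * card (adjp E B S e))"
    unfolding D3_def Es using finE'
    by (simp add: card_SigmaI finite_tum finite_adjp fin card_cartesian_product)
  also have "\<dots> \<le> (\<Sum>e\<in>set_pmf \<mu>. 2 * ?t e ^ 2)"
  proof (rule sum_mono)
    fix e assume "e \<in> set_pmf \<mu>"
    then have eB: "e \<subseteq> B" "card e = 2" using Es unfolding complete_edges_def by auto
    show "?t e * card (adjp E B S e) \<le> 2 * ?t e ^ 2"
      using mult_left_mono[OF adjp_card[OF tg pl eB], of "?t e"] by (simp add: power2_eq_square)
  qed
  finally have "real (card (D3 E B S)) \<le> real (\<Sum>e\<in>set_pmf \<mu>. 2 * ?t e ^ 2)"
    by (simp only: of_nat_le_iff)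
  also have "\<dots> = (\<Sum>e\<in>set_pmf \<mu>. 2 * real (?t e) ^ 2)"
    by (simp only: of_nat_sum of_nat_mult of_nat_numeral of_nat_power)
  also have "\<dots> \<le> (\<Sum>e\<in>set_pmf \<mu>. 2 * (pmf \<mu> e ^ 2 * real n ^ 2))"
  proof (rule sum_mono)
    fix e assume e: "e \<in> set_pmf \<mu>"
    then have "real (?t e) = real T * pmf \<mu> e" using pm[of e] Es T by auto
    then have "real (?t e) ^ 2 = pmf \<mu> e ^ 2 * real T ^ 2" by (simp add: power_mult_distrib)
    also have "\<dots> \<le> pmf \<mu> e ^ 2 * real n ^ 2"
      using T by (intro mult_left_mono power_mono) auto
    finally show "2 * real (?t e) ^ 2 \<le> 2 * (pmf \<mu> e ^ 2 * real n ^ 2)" by simp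
  qed
  also have "\<dots> = 2 * (\<Sum>e\<in>set_pmf \<mu>. (pmf \<mu> e)^2) * real n ^ 2"
    by (simp add: sum_distrib_left sum_distrib_right mult.assoc)
  finally show ?thesis .
qed



theorem lemma3p7:
  fixes V :: "'a set" and E :: "'a set set" and B S :: "'a set"
  assumes "tumor_graph V E B S"
    and "benign V E B S"
    and "planar_graph V E"
    and "card B \<ge> 2"
  shows "\<exists>\<mu> :: 'a set pmf. set_pmf \<mu> \<subseteq> complete_edges B \<and>
     real (cyc V E B S 2) \<le>
       (2 * (\<Sum>e\<in>set_pmf \<mu>. (pmf \<mu> e)^2) + beta \<mu> (path_copies B 3)) * (real (card V))^2 \<and>
     (\<forall>m\<ge>3. real (cyc V E B S m) \<le>
       (2 * real m * beta \<mu> (cycle_copies B m) + beta \<mu> (path_copies B (m+1))) * (real (card V))^m)"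
proof -
  note tg = assms(1) and bn = assms(2) and pl = assms(3)
  have finV: "finite V" and BV: "B \<subseteq> V" and SV: "S \<subseteq> V" and VBS: "V = B \<union> S"
    using tumor_graphD[OF tg] by auto
  have finB: "finite B" using finV BV finite_subset by blast
  have finS: "finite S" using finV SV finite_subset by blast
  define n where "n = card V"
  define h where "h s = nbrs E s \<inter> B" for s
  define U where "U = {s \<in> S. h s \<in> complete_edges B}"
  have beta_nn: "beta \<mu> X \<ge> 0" for \<mu> :: "'a set pmf" and X
    unfolding beta_def by (intro sum_nonneg prod_nonneg) auto
  have Ugood: "v 1 \<in> U" if m: "m \<ge> 2" and gv: "goodv V E B S m v" for m v
  proof -
    have s: "v 1 \<in> S" using gv m unfolding goodv_def by auto
    have vB: "v 0 \<in> B" "v 2 \<in> B" using gv m unfolding goodv_def by auto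
    have e1: "{v 0, v 1} \<in> E" using goodv_edges(1)[OF gv, of 0] m by simp
    have e2: "{v 2, v 1} \<in> E" using goodv_edges(1)[OF gv, of 1] m by (simp add: insert_commute numeral_2_eq_2)
    have ne: "v 0 \<noteq> v 2" using goodv_inj[OF gv, of 0 2] m by simp
    have "v 1 \<in> tum E B S {v 0, v 2}" by (rule tum_mem[OF tg s e1 e2 ne vB])
    then have "h (v 1) = {v 0, v 2}" unfolding tum_def h_def by simp
    moreover have "{v 0, v 2} \<in> complete_edges B" using vB ne unfolding complete_edges_def by auto
    ultimately show ?thesis unfolding U_def using s by simp
  qed
  show ?thesis
  proof (cases "U = {}")
    case True
    obtain A where A: "A \<subseteq> B" "card A = 2" using obtain_subset_with_card_n[OF assms(4)] by blast
    then obtain b1 b2 where b: "A = {b1, b2}" "b1 \<noteq> b2" unfolding card_2_iff by blast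
    define \<mu> where "\<mu> = return_pmf {b1, b2}"
    have empty: "good_cycles V E B S m = {}" if "m \<ge> 2" for m
      unfolding good_cycles_eq using Ugood[OF that] True by blast
    show ?thesis
    proof (intro exI[of _ \<mu>] conjI allI impI)
      show "set_pmf \<mu> \<subseteq> complete_edges B" unfolding \<mu>_def complete_edges_def using A b by auto
      show "real (cyc V E B S 2) \<le> (2 * (\<Sum>e\<in>set_pmf \<mu>. (pmf \<mu> e)^2) + beta \<mu> (path_copies B 3)) * (real (card V))^2"
        unfolding cyc_def using empty[of 2] beta_nn[of \<mu>] by (simp add: sum_nonneg)
      fix m :: nat assume "m \<ge> 3"
      then show "real (cyc V E B S m) \<le> (2 * real m * beta \<mu> (cycle_copies B m) + beta \<mu> (path_copies B (m+1))) * (real (card V))^m"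
        unfolding cyc_def using empty[of m] beta_nn[of \<mu>] by simp
    qed
  next
    case False
    have finU: "finite U" using finS unfolding U_def by simp
    define T where "T = card U"
    have T: "T > 0" "T \<le> n" unfolding T_def n_def using False finU finV SV
      by (auto simp: card_gt_0_iff U_def intro!: card_mono)
    define \<mu> where "\<mu> = map_pmf h (pmf_of_set U)"
    have pm: "pmf \<mu> f = real (card (tum E B S f)) / real T" if f: "f \<in> complete_edges B" for f
    proof -
      have "pmf \<mu> f = measure (pmf_of_set U) (h -` {f})" unfolding \<mu>_def by (rule pmf_map)
      also have "\<dots> = card (U \<inter> h -` {f}) / card U" using False finU by (rule measure_pmf_of_set)
      also have "U \<inter> h -` {f} = tum E B S f" unfolding U_def tum_def h_def using f by auto
      finally show ?thesis unfolding T_def .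
    qed
    have Es: "set_pmf \<mu> = {e \<in> complete_edges B. tum E B S e \<noteq> {}}"
      unfolding \<mu>_def using False finU unfolding U_def tum_def h_def by auto
    have sub: "set_pmf \<mu> \<subseteq> complete_edges B" using Es by auto
    define D1 where "D1 m = Sigma (path_copies B (Suc m)) (\<lambda>P. PiE P (tum E B S))" for m
    have finD1: "finite (D1 m)" for m
      unfolding D1_def using finite_path_copies[OF finB] path_copies_props(1)
      by (auto intro!: finite_SigmaI finite_PiE simp: finite_tum finS)
    have finD2: "finite (D2 E B S m)" if "m \<ge> 2" for m
      unfolding D2_def using finite_cycle_copies[OF finB] cycle_copies_props(1)[OF _ that]
      by (auto intro!: finite_SigmaI finite_PiE finite_cartesian_product simp: finite_tum finite_adjp finS)
    have finE: "finite (complete_edges B)"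
      by (rule finite_subset[of _ "Pow B"]) (auto simp: complete_edges_def finB)
    have finD3: "finite (D3 E B S)"
      unfolding D3_def using finE
      by (auto intro!: finite_SigmaI finite_cartesian_product simp: finite_tum finite_adjp finS)
    have B1: "real (card (D1 m)) \<le> real n ^ m * beta \<mu> (path_copies B (Suc m))" for m
      unfolding D1_def by (rule card_D1_bound[OF finB finS T pm])
    show ?thesis
    proof (intro exI[of _ \<mu>] conjI allI impI)
      show "set_pmf \<mu> \<subseteq> complete_edges B" by (rule sub)
      have "good_cycles V E B S 2 \<subseteq> F1 ` D1 2 \<union> F3 ` D3 E B S"
      proof
        fix C assume "C \<in> good_cycles V E B S 2"
        then obtain v where C: "C = cycle_edges (2 * 2 + 1) v" and gv: "goodv V E B S 2 v"
          unfolding good_cycles_eq by blast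
        have "v (2 * 2) \<in> V" using gv unfolding goodv_def by auto
        then consider "v (2 * 2) \<in> B" | "v (2 * 2) \<in> S" using VBS by blast
        then show "C \<in> F1 ` D1 2 \<union> F3 ` D3 E B S"
        proof cases
          case 1 then show ?thesis using path_case[OF tg _ gv 1] C unfolding D1_def by simp
        next
          case 2 then show ?thesis using cyc2_case[OF tg bn gv] C by simp
        qed
      qed
      then have "cyc V E B S 2 \<le> card (F1 ` D1 2 \<union> F3 ` D3 E B S)"
        unfolding cyc_def by (rule card_mono[rotated]) (simp add: finD1 finD3)
      also have "\<dots> \<le> card (F1 ` D1 2) + card (F3 ` D3 E B S)" by (rule card_Un_le)
      also have "\<dots> \<le> card (D1 2) + card (D3 E B S)" by (intro add_mono card_image_le finD1 finD3)
      finally have "real (cyc V E B S 2) \<le> real (card (D1 2)) + real (card (D3 E B S))" by simp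
      also have "\<dots> \<le> real n ^ 2 * beta \<mu> (path_copies B 3) + 2 * (\<Sum>e\<in>set_pmf \<mu>. (pmf \<mu> e)^2) * real n ^ 2"
        using B1[of 2] card_D3_bound[OF tg pl finB finS T pm Es] by (simp add: numeral_3_eq_3)
      finally show "real (cyc V E B S 2) \<le> (2 * (\<Sum>e\<in>set_pmf \<mu>. (pmf \<mu> e)^2) + beta \<mu> (path_copies B 3)) * (real (card V))^2"
        unfolding n_def by (simp add: algebra_simps)
    next
      fix m :: nat assume m: "m \<ge> 3"
      have "good_cycles V E B S m \<subseteq> F1 ` D1 m \<union> F2 ` D2 E B S m"
      proof
        fix C assume "C \<in> good_cycles V E B S m"
        then obtain v where C: "C = cycle_edges (2 * m + 1) v" and gv: "goodv V E B S m v"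
          unfolding good_cycles_eq by blast
        have "v (2 * m) \<in> V" using gv unfolding goodv_def by auto
        then consider "v (2 * m) \<in> B" | "v (2 * m) \<in> S" using VBS by blast
        then show "C \<in> F1 ` D1 m \<union> F2 ` D2 E B S m"
        proof cases
          case 1 then show ?thesis using path_case[OF tg _ gv 1] m C unfolding D1_def by simp
        next
          case 2 then show ?thesis using cyc_case[OF tg bn m gv 2] C by simp
        qed
      qed
      then have "cyc V E B S m \<le> card (F1 ` D1 m \<union> F2 ` D2 E B S m)"
        unfolding cyc_def by (rule card_mono[rotated]) (use m in \<open>simp add: finD1 finD2\<close>)
      also have "\<dots> \<le> card (F1 ` D1 m) + card (F2 ` D2 E B S m)" by (rule card_Un_le)
      also have "\<dots> \<le> card (D1 m) + card (D2 E B S m)" using m by (intro add_mono card_image_le finD1 finD2) auto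
      finally have "real (cyc V E B S m) \<le> real (card (D1 m)) + real (card (D2 E B S m))" by simp
      also have "\<dots> \<le> real n ^ m * beta \<mu> (path_copies B (Suc m)) + 2 * real m * real n ^ m * beta \<mu> (cycle_copies B m)"
        using B1[of m] card_D2_bound[OF tg pl _ finB finS T pm, of m] m by simp
      finally show "real (cyc V E B S m) \<le> (2 * real m * beta \<mu> (cycle_copies B m) + beta \<mu> (path_copies B (m+1))) * (real (card V))^m"
        unfolding n_def by (simp add: algebra_simps)
    qed
  qed
qed


end
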